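(* Let $n>5$ and let $R$ be either of the complex Lie algebras $R(g^1_{(n,1)},2)$ ($n$ odd) or $R(g^2_{(n,1)},2)$ defined in the context. Then the second adjoint cohomology group vanishes: $H^2(R,R)=\{0\}$.
   Context: $R(g^1_{(n,1)},2)$ ($n$ odd): Lie algebra with basis $\{e_1,\dots,e_n,x,y\}$ and nonzero brackets (plus antisymmetric counterparts) $[e_1,e_i]=e_{i+1}$ ($2\le i\le n-2$), $[e_i,e_{n-i}]=(-1)^ie_n$ ($2\le i\le\frac{n-1}{2}$), $[e_1,x]=e_1$, $[e_i,x]=(i-2)e_i$ ($2\le i\le n-1$), $[e_n,x]=(n-4)e_n$, $[e_i,y]=e_i$ ($2\le i\le n-1$), $[e_n,y]=2e_n$. $R(g^2_{(n,1)},2)$: Lie algebra with basis $\{e_1,\dots,e_n,x,y\}$ and nonzero brackets (plus antisymmetric counterparts) $[e_1,e_i]=e_{i+1}$ ($2\le i\le n-2$), $[e_i,e_n]=e_{i+2}$ ($2\le i\le n-3$), $[e_1,x]=e_1$, $[e_i,x]=(i-2)e_i$ ($2\le i\le n-1$), $[e_n,x]=2e_n$, $[e_i,y]=e_i$ ($2\le i\le n-1$). $H^2(R,R)$ denotes the second Chevalley–Eilenberg cohomology of the Lie algebra $R$ with coefficients in the adjoint module. *)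

theory Defs
  imports Complex_Main
begin

text \<open>Finite-dimensional complex vector spaces are modelled as functions
  nat \<Rightarrow> complex supported on a finite index set I; the basis vector
  with index k is ev k.  A Lie bracket is given by its values on basis
  pairs and extended bilinearly.\<close>

type_synonym vec = "nat \<Rightarrow> complex"

definition vsp :: "nat set \<Rightarrow> vec set" where
  "vsp I = {v. \<forall>i. i \<notin> I \<longrightarrow> v i = 0}"

definition vadd :: "vec \<Rightarrow> vec \<Rightarrow> vec" where
  "vadd u v = (\<lambda>m. u m + v m)"

definition vsub :: "vec \<Rightarrow> vec \<Rightarrow> vec" where
  "vsub u v = (\<lambda>m. u m - v m)"

definition smul :: "complex \<Rightarrow> vec \<Rightarrow> vec" where
  "smul c v = (\<lambda>m. c * v m)"

definition vzero :: vec where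
  "vzero = (\<lambda>m. 0)"

definition ev :: "nat \<Rightarrow> vec" where
  "ev k = (\<lambda>m. if m = k then 1 else 0)"

definition bil_ext :: "nat set \<Rightarrow> (nat \<Rightarrow> nat \<Rightarrow> vec) \<Rightarrow> vec \<Rightarrow> vec \<Rightarrow> vec" where
  "bil_ext I b x y = (\<lambda>m. \<Sum>i\<in>I. \<Sum>j\<in>I. x i * y j * b i j m)"

definition lin_on :: "nat set \<Rightarrow> (vec \<Rightarrow> vec) \<Rightarrow> bool" where
  "lin_on I f \<longleftrightarrow> (\<forall>x\<in>vsp I. f x \<in> vsp I) \<and>
     (\<forall>x\<in>vsp I. \<forall>y\<in>vsp I. f (vadd x y) = vadd (f x) (f y)) \<and>
     (\<forall>c. \<forall>x\<in>vsp I. f (smul c x) = smul c (f x))"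

definition cochain2 :: "nat set \<Rightarrow> (vec \<Rightarrow> vec \<Rightarrow> vec) \<Rightarrow> bool" where
  "cochain2 I \<phi> \<longleftrightarrow> (\<forall>y\<in>vsp I. lin_on I (\<lambda>x. \<phi> x y)) \<and>
     (\<forall>x\<in>vsp I. lin_on I (\<lambda>y. \<phi> x y)) \<and>
     (\<forall>x\<in>vsp I. \<phi> x x = vzero)"

definition d2 :: "(vec \<Rightarrow> vec \<Rightarrow> vec) \<Rightarrow> (vec \<Rightarrow> vec \<Rightarrow> vec) \<Rightarrow> vec \<Rightarrow> vec \<Rightarrow> vec \<Rightarrow> vec" where
  "d2 br \<phi> x y z = (\<lambda>m.
       br x (\<phi> y z) m - br y (\<phi> x z) m + br z (\<phi> x y) m
     - \<phi> (br x y) z m + \<phi> (br x z) y m - \<phi> (br y z) x m)"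

definition d1 :: "(vec \<Rightarrow> vec \<Rightarrow> vec) \<Rightarrow> (vec \<Rightarrow> vec) \<Rightarrow> vec \<Rightarrow> vec \<Rightarrow> vec" where
  "d1 br f x y = vsub (vsub (br x (f y)) (br y (f x))) (f (br x y))"

definition H2_adj_zero :: "nat set \<Rightarrow> (vec \<Rightarrow> vec \<Rightarrow> vec) \<Rightarrow> bool" where
  "H2_adj_zero I br \<longleftrightarrow>
     (\<forall>\<phi>. cochain2 I \<phi> \<and> (\<forall>x\<in>vsp I. \<forall>y\<in>vsp I. \<forall>z\<in>vsp I. d2 br \<phi> x y z = vzero)
        \<longrightarrow> (\<exists>f. lin_on I f \<and> (\<forall>x\<in>vsp I. \<forall>y\<in>vsp I. \<phi> x y = d1 br f x y)))"

text \<open>Basis indexing: e_i \<mapsto> i (1 \<le> i \<le> n), x \<mapsto> n+1, y \<mapsto> n+2.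
  The tables list the given nonzero brackets; the bracket on basis pairs is
  their antisymmetrization.\<close>

definition tab1 :: "nat \<Rightarrow> nat \<Rightarrow> nat \<Rightarrow> vec" where
  "tab1 n i j =
    (if i = 1 \<and> 2 \<le> j \<and> j \<le> n - 2 then ev (j + 1)
     else if 2 \<le> i \<and> i \<le> (n - 1) div 2 \<and> j = n - i then smul ((-1) ^ i) (ev n)
     else if j = n + 1 then
       (if i = 1 then ev 1
        else if 2 \<le> i \<and> i \<le> n - 1 then smul (of_int (int i - 2)) (ev i)
        else if i = n then smul (of_int (int n - 4)) (ev n)
        else vzero)
     else if j = n + 2 then
       (if 2 \<le> i \<and> i \<le> n - 1 then ev i
        else if i = n then smul 2 (ev n)
        else vzero)
     else vzero)"

definition tab2 :: "nat \<Rightarrow> nat \<Rightarrow> nat \<Rightarrow> vec" where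
  "tab2 n i j =
    (if i = 1 \<and> 2 \<le> j \<and> j \<le> n - 2 then ev (j + 1)
     else if 2 \<le> i \<and> i \<le> n - 3 \<and> j = n then ev (i + 2)
     else if j = n + 1 then
       (if i = 1 then ev 1
        else if 2 \<le> i \<and> i \<le> n - 1 then smul (of_int (int i - 2)) (ev i)
        else if i = n then smul 2 (ev n)
        else vzero)
     else if j = n + 2 then
       (if 2 \<le> i \<and> i \<le> n - 1 then ev i else vzero)
     else vzero)"

definition antisym_tab :: "(nat \<Rightarrow> nat \<Rightarrow> vec) \<Rightarrow> nat \<Rightarrow> nat \<Rightarrow> vec" where
  "antisym_tab T i j = vsub (T i j) (T j i)"

definition idxR :: "nat \<Rightarrow> nat set" where
  "idxR n = {1..n + 2}"

definition brR1 :: "nat \<Rightarrow> vec \<Rightarrow> vec \<Rightarrow> vec" where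
  "brR1 n = bil_ext (idxR n) (antisym_tab (tab1 n))"

definition brR2 :: "nat \<Rightarrow> vec \<Rightarrow> vec \<Rightarrow> vec" where
  "brR2 n = bil_ext (idxR n) (antisym_tab (tab2 n))"

end

theory Submission
  imports Defs
begin


lemma ev_vsp: "i \<in> I \<Longrightarrow> ev i \<in> vsp I" by (simp add: ev_def vsp_def)

lemma lin_zero: assumes "lin_on I f" shows "f vzero = vzero"
proof -
  have "vzero \<in> vsp I" by (simp add: vsp_def vzero_def)
  hence "f (smul 0 vzero) = smul 0 (f vzero)" using assms by (simp add: lin_on_def)
  moreover have "smul 0 vzero = vzero" by (simp add: smul_def vzero_def)
  ultimately show ?thesis by (simp add: smul_def vzero_def)
qed

lemma lin_expand_aux:
  assumes lin: "lin_on I f" and fin: "finite J" and JI: "J \<subseteq> I"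
  shows "\<forall>x. (\<forall>i. i \<notin> J \<longrightarrow> x i = 0) \<longrightarrow> f x = (\<lambda>m. \<Sum>i\<in>J. x i * f (ev i) m)"
  using fin JI
proof (induction J rule: finite_induct)
  case empty
  show ?case
  proof (intro allI impI)
    fix x :: vec assume "\<forall>i. i \<notin> {} \<longrightarrow> x i = 0"
    hence "x = vzero" by (auto simp: vzero_def)
    thus "f x = (\<lambda>m. \<Sum>i\<in>{}. x i * f (ev i) m)" using lin_zero[OF lin] by (simp add: vzero_def)
  qed
next
  case (insert a J)
  show ?case
  proof (intro allI impI)
    fix x :: vec assume xs: "\<forall>i. i \<notin> insert a J \<longrightarrow> x i = 0"
    define x' where "x' = x(a := 0)"
    have x's: "\<forall>i. i \<notin> J \<longrightarrow> x' i = 0" using xs by (auto simp: x'_def)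
    have aI: "a \<in> I" using insert by auto
    have v1: "smul (x a) (ev a) \<in> vsp I" using aI by (simp add: vsp_def smul_def ev_def)
    have v2: "x' \<in> vsp I" using x's insert by (auto simp: vsp_def)
    have xe: "x = vadd (smul (x a) (ev a)) x'" by (auto simp: x'_def vadd_def smul_def ev_def)
    have e: "f (vadd (smul (x a) (ev a)) x') = vadd (f (smul (x a) (ev a))) (f x')" using lin v1 v2 by (simp add: lin_on_def)
    have "f x = vadd (f (smul (x a) (ev a))) (f x')" using e by (simp only: xe[symmetric])
    also have "f (smul (x a) (ev a)) = smul (x a) (f (ev a))" using lin ev_vsp[OF aI] by (simp add: lin_on_def)
    also have "f x' = (\<lambda>m. \<Sum>i\<in>J. x' i * f (ev i) m)" using insert x's by auto
    also have "(\<lambda>m. \<Sum>i\<in>J. x' i * f (ev i) m) = (\<lambda>m. \<Sum>i\<in>J. x i * f (ev i) m)"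
      using insert by (auto simp: x'_def intro!: sum.cong)
    finally show "f x = (\<lambda>m. \<Sum>i\<in>insert a J. x i * f (ev i) m)"
      using insert by (simp add: vadd_def smul_def)
  qed
qed

lemma lin_expand:
  assumes "lin_on I f" "finite I" "x \<in> vsp I"
  shows "f x m = (\<Sum>i\<in>I. x i * f (ev i) m)"
  using lin_expand_aux[OF assms(1,2) order_refl] assms(3) by (simp add: vsp_def)

lemma coch_expand:
  assumes c: "cochain2 I \<phi>" and fin: "finite I" and x: "x \<in> vsp I" and y: "y \<in> vsp I"
  shows "\<phi> x y m = (\<Sum>i\<in>I. \<Sum>j\<in>I. x i * y j * \<phi> (ev i) (ev j) m)"
proof -
  have "\<phi> x y m = (\<Sum>i\<in>I. x i * \<phi> (ev i) y m)"
    using lin_expand[of I "\<lambda>x. \<phi> x y", OF _ fin x] c y by (simp add: cochain2_def)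
  also have "\<dots> = (\<Sum>i\<in>I. x i * (\<Sum>j\<in>I. y j * \<phi> (ev i) (ev j) m))"
  proof (rule sum.cong[OF refl])
    fix i assume "i \<in> I"
    hence "\<phi> (ev i) y m = (\<Sum>j\<in>I. y j * \<phi> (ev i) (ev j) m)"
      using lin_expand[of I "\<lambda>y. \<phi> (ev i) y", OF _ fin y] c ev_vsp by (simp add: cochain2_def)
    thus "x i * \<phi> (ev i) y m = x i * (\<Sum>j\<in>I. y j * \<phi> (ev i) (ev j) m)" by simp
  qed
  finally show ?thesis by (simp add: sum_distrib_left mult.assoc)
qed

lemma coch_vsp:
  assumes c: "cochain2 I \<phi>" and x: "x \<in> vsp I" and y: "y \<in> vsp I" and m: "m \<notin> I"
  shows "\<phi> x y m = 0"
proof -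
  have "\<phi> x y \<in> vsp I" using c x y by (auto simp: cochain2_def lin_on_def)
  thus ?thesis using m by (simp add: vsp_def)
qed

lemma coch_anti:
  assumes c: "cochain2 I \<phi>" and a: "a \<in> vsp I" and b: "b \<in> vsp I"
  shows "\<phi> a b m = - \<phi> b a m"
proof -
  have s: "vadd a b \<in> vsp I" using a b by (simp add: vsp_def vadd_def)
  have "\<phi> (vadd a b) (vadd a b) = vadd (\<phi> a (vadd a b)) (\<phi> b (vadd a b))"
    using c a b s unfolding cochain2_def lin_on_def by blast
  also have "\<phi> a (vadd a b) = vadd (\<phi> a a) (\<phi> a b)" using c a b by (simp add: cochain2_def lin_on_def)
  also have "\<phi> b (vadd a b) = vadd (\<phi> b a) (\<phi> b b)" using c a b by (simp add: cochain2_def lin_on_def)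
  finally have eq: "\<phi> (vadd a b) (vadd a b) = vadd (vadd (\<phi> a a) (\<phi> a b)) (vadd (\<phi> b a) (\<phi> b b))" .
  have z: "\<phi> (vadd a b) (vadd a b) = vzero" using c s by (simp add: cochain2_def)
  from eq z have "0 = \<phi> a a m + \<phi> a b m + (\<phi> b a m + \<phi> b b m)"
    by (simp add: vadd_def vzero_def fun_eq_iff)
  moreover have "\<phi> a a m = 0" "\<phi> b b m = 0" using c a b by (auto simp: cochain2_def vzero_def)
  ultimately show ?thesis by (simp add: eq_neg_iff_add_eq_0)
qed

lemma sum_ev: "finite I \<Longrightarrow> a \<in> I \<Longrightarrow> (\<Sum>i\<in>I. ev a i * g i) = g a"
proof -
  assume "finite I" "a \<in> I"
  have "(\<lambda>i. ev a i * g i) = (\<lambda>i. if i = a then g i else 0)" by (auto simp: ev_def fun_eq_iff)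
  thus ?thesis using \<open>finite I\<close> \<open>a \<in> I\<close> by (simp only: sum.delta) simp
qed

lemma bil_ev_left:
  assumes "finite I" "a \<in> I"
  shows "bil_ext I C (ev a) v m = (\<Sum>k\<in>I. v k * C a k m)"
proof -
  have "bil_ext I C (ev a) v m = (\<Sum>i\<in>I. ev a i * (\<Sum>k\<in>I. v k * C i k m))"
    by (simp add: bil_ext_def sum_distrib_left mult.assoc)
  thus ?thesis using sum_ev[OF assms] by simp
qed

lemma bil_ev_ev:
  assumes "finite I" "a \<in> I" "b \<in> I"
  shows "bil_ext I C (ev a) (ev b) = (\<lambda>m. C a b m)"
proof
  fix m
  have "bil_ext I C (ev a) (ev b) m = (\<Sum>k\<in>I. ev b k * C a k m)" using bil_ev_left[OF assms(1,2)] .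
  also have "\<dots> = C a b m" using sum_ev[OF assms(1,3), of "\<lambda>k. C a k m"] .
  finally show "bil_ext I C (ev a) (ev b) m = C a b m" .
qed


definition Qf :: "nat set \<Rightarrow> (nat \<Rightarrow> nat \<Rightarrow> nat \<Rightarrow> complex) \<Rightarrow> (nat \<Rightarrow> nat \<Rightarrow> complex) \<Rightarrow> nat \<Rightarrow> nat \<Rightarrow> nat \<Rightarrow> complex" where
  "Qf I C G i j m = (\<Sum>k\<in>I. G j k * C i k m) - (\<Sum>k\<in>I. G i k * C j k m) - (\<Sum>k\<in>I. C i j k * G k m)"

lemma T1: fixes C :: "nat \<Rightarrow> nat \<Rightarrow> nat \<Rightarrow> complex" shows "(\<Sum>i\<in>I. \<Sum>k\<in>I. x i * (\<Sum>a\<in>I. y a * F a k) * C i k m) =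
   (\<Sum>i\<in>I. \<Sum>j\<in>I. x i * y j * (\<Sum>k\<in>I. F j k * C i k m))"
proof -
  have "(\<Sum>i\<in>I. \<Sum>k\<in>I. x i * (\<Sum>a\<in>I. y a * F a k) * C i k m) = (\<Sum>i\<in>I. \<Sum>k\<in>I. \<Sum>a\<in>I. x i * (y a * (F a k * C i k m)))"
    by (simp add: sum_distrib_left sum_distrib_right mult.assoc)
  also have "\<dots> = (\<Sum>i\<in>I. \<Sum>a\<in>I. \<Sum>k\<in>I. x i * (y a * (F a k * C i k m)))"
    by (rule sum.cong[OF refl], rule sum.swap)
  also have "\<dots> = (\<Sum>i\<in>I. \<Sum>j\<in>I. x i * y j * (\<Sum>k\<in>I. F j k * C i k m))"
    by (simp add: sum_distrib_left mult.assoc)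
  finally show ?thesis .
qed

lemma T2: "(\<Sum>i\<in>I. \<Sum>j\<in>I. y i * x j * H j i) = (\<Sum>i\<in>I. \<Sum>j\<in>I. x i * y j * (H i j :: complex))"
  by (subst sum.swap) (simp add: mult.commute)

lemma T3: fixes C :: "nat \<Rightarrow> nat \<Rightarrow> nat \<Rightarrow> complex" shows "(\<Sum>a\<in>I. (\<Sum>i\<in>I. \<Sum>j\<in>I. x i * y j * C i j a) * F a m) =
   (\<Sum>i\<in>I. \<Sum>j\<in>I. x i * y j * (\<Sum>k\<in>I. C i j k * F k m))"
proof -
  have "(\<Sum>a\<in>I. (\<Sum>i\<in>I. \<Sum>j\<in>I. x i * y j * C i j a) * F a m) = (\<Sum>a\<in>I. \<Sum>i\<in>I. \<Sum>j\<in>I. x i * (y j * (C i j a * F a m)))"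
    by (simp add: sum_distrib_right mult.assoc)
  also have "\<dots> = (\<Sum>i\<in>I. \<Sum>a\<in>I. \<Sum>j\<in>I. x i * (y j * (C i j a * F a m)))"
    by (rule sum.swap)
  also have "\<dots> = (\<Sum>i\<in>I. \<Sum>j\<in>I. \<Sum>a\<in>I. x i * (y j * (C i j a * F a m)))"
    by (rule sum.cong[OF refl], rule sum.swap)
  also have "\<dots> = (\<Sum>i\<in>I. \<Sum>j\<in>I. x i * y j * (\<Sum>k\<in>I. C i j k * F k m))"
    by (simp add: sum_distrib_left mult.assoc)
  finally show ?thesis .
qed

lemma d1_expand:
  "d1 (bil_ext I C) (\<lambda>v m. \<Sum>a\<in>I. v a * F a m) x y m = (\<Sum>i\<in>I. \<Sum>j\<in>I. x i * y j * Qf I C F i j m)"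
proof -
  have e2: "(\<Sum>i\<in>I. \<Sum>k\<in>I. y i * (\<Sum>a\<in>I. x a * F a k) * C i k m) = (\<Sum>i\<in>I. \<Sum>j\<in>I. x i * y j * (\<Sum>k\<in>I. F i k * C j k m))"
    using T1[where x=y and y=x and I=I and F=F and C=C and m=m] T2[where I=I and y=y and x=x and H="\<lambda>j i. (\<Sum>k\<in>I. F j k * C i k m)"] by simp
  show ?thesis
  unfolding d1_def vsub_def bil_ext_def Qf_def
  by (simp only: T1 T3 right_diff_distrib sum_subtractf T2[where I=I and y=y and x=x and H="\<lambda>j i. (\<Sum>k\<in>I. F j k * C i k m)"])
qed


definition CEq :: "nat set \<Rightarrow> (nat \<Rightarrow> nat \<Rightarrow> nat \<Rightarrow> complex) \<Rightarrow> (nat \<Rightarrow> nat \<Rightarrow> nat \<Rightarrow> complex) \<Rightarrow> nat \<Rightarrow> nat \<Rightarrow> nat \<Rightarrow> nat \<Rightarrow> complex" where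
  "CEq I C P a b c m = (\<Sum>k\<in>I. P b c k * C a k m) - (\<Sum>k\<in>I. P a c k * C b k m) + (\<Sum>k\<in>I. P a b k * C c k m)
     - (\<Sum>k\<in>I. C a b k * P k c m) + (\<Sum>k\<in>I. C a c k * P k b m) - (\<Sum>k\<in>I. C b c k * P k a m)"

lemma CE_of_cocycle:
  assumes fin: "finite I" and Cs: "\<forall>a b m. a\<in>I \<longrightarrow> b\<in>I \<longrightarrow> m\<notin>I \<longrightarrow> C a b m = 0"
    and coch: "cochain2 I \<phi>"
    and cyc: "\<forall>x\<in>vsp I. \<forall>y\<in>vsp I. \<forall>z\<in>vsp I. d2 (bil_ext I C) \<phi> x y z = vzero"
    and a: "a \<in> I" and b: "b \<in> I" and c: "c \<in> I"
  shows "CEq I C (\<lambda>i j m. \<phi> (ev i) (ev j) m) a b c m = 0"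
proof -
  have pe: "\<phi> (bil_ext I C (ev u) (ev v)) (ev w) m = (\<Sum>k\<in>I. C u v k * \<phi> (ev k) (ev w) m)"
    if "u \<in> I" "v \<in> I" "w \<in> I" for u v w
  proof -
    have bv: "bil_ext I C (ev u) (ev v) = (\<lambda>m. C u v m)" using bil_ev_ev[OF fin that(1,2)] .
    have vs: "(\<lambda>m. C u v m) \<in> vsp I" using Cs that by (auto simp: vsp_def)
    have "lin_on I (\<lambda>x. \<phi> x (ev w))" using coch ev_vsp[OF that(3)] by (simp add: cochain2_def)
    from lin_expand[OF this fin vs] show ?thesis by (simp add: bv)
  qed
  have "d2 (bil_ext I C) \<phi> (ev a) (ev b) (ev c) m = 0"
    using cyc ev_vsp[OF a] ev_vsp[OF b] ev_vsp[OF c] by (simp add: vzero_def)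
  thus ?thesis unfolding d2_def CEq_def
    by (simp only: bil_ev_left[OF fin a] bil_ev_left[OF fin b] bil_ev_left[OF fin c] pe a b c)
qed

lemma H2_from_coeff:
  assumes fin: "finite I" and Cs: "\<forall>a b m. a\<in>I \<longrightarrow> b\<in>I \<longrightarrow> m\<notin>I \<longrightarrow> C a b m = 0"
    and coef: "\<And>P. (\<forall>i j m. P i j m = - P j i m) \<Longrightarrow>
        (\<forall>a b c m. a\<in>I \<longrightarrow> b\<in>I \<longrightarrow> c\<in>I \<longrightarrow> m\<in>I \<longrightarrow> CEq I C P a b c m = 0) \<Longrightarrow>
        (\<exists>F. \<forall>i j m. i\<in>I \<longrightarrow> j\<in>I \<longrightarrow> m\<in>I \<longrightarrow> P i j m = Qf I C F i j m)"
  shows "H2_adj_zero I (bil_ext I C)"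
  unfolding H2_adj_zero_def
proof (intro allI impI)
  fix \<phi> assume h: "cochain2 I \<phi> \<and> (\<forall>x\<in>vsp I. \<forall>y\<in>vsp I. \<forall>z\<in>vsp I. d2 (bil_ext I C) \<phi> x y z = vzero)"
  hence coch: "cochain2 I \<phi>" and cyc: "\<forall>x\<in>vsp I. \<forall>y\<in>vsp I. \<forall>z\<in>vsp I. d2 (bil_ext I C) \<phi> x y z = vzero" by auto
  define P where "P i j m = (if i \<in> I \<and> j \<in> I then \<phi> (ev i) (ev j) m else 0)" for i j m
  have Pa: "\<forall>i j m. P i j m = - P j i m"
  proof (intro allI)
    fix i j m
    show "P i j m = - P j i m"
    proof (cases "i \<in> I \<and> j \<in> I")
      case True
      have "\<phi> (ev i) (ev j) m = - \<phi> (ev j) (ev i) m"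
        using coch_anti[OF coch ev_vsp[of i I] ev_vsp[of j I]] True by blast
      thus ?thesis using True unfolding P_def by simp
    next
      case False thus ?thesis unfolding P_def by auto
    qed
  qed
  have PCE: "\<forall>a b c m. a\<in>I \<longrightarrow> b\<in>I \<longrightarrow> c\<in>I \<longrightarrow> m\<in>I \<longrightarrow> CEq I C P a b c m = 0"
  proof (intro allI impI)
    fix a b c m assume a: "a \<in> I" and b: "b \<in> I" and c: "c \<in> I" and "m \<in> I"
    have "CEq I C P a b c m = CEq I C (\<lambda>i j m. \<phi> (ev i) (ev j) m) a b c m"
      unfolding CEq_def P_def using a b c by (simp cong: sum.cong)
    thus "CEq I C P a b c m = 0" using CE_of_cocycle[OF fin Cs coch cyc a b c] by simp
  qed
  obtain F where F: "\<forall>i j m. i\<in>I \<longrightarrow> j\<in>I \<longrightarrow> m\<in>I \<longrightarrow> P i j m = Qf I C F i j m"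
    using coef[OF Pa PCE] by blast
  define F' where "F' a m = (if m \<in> I then F a m else 0)" for a m
  have eqall: "\<phi> (ev i) (ev j) m = Qf I C F' i j m" if i: "i \<in> I" and j: "j \<in> I" for i j m
  proof (cases "m \<in> I")
    case True
    have "Qf I C F' i j m = Qf I C F i j m" unfolding Qf_def F'_def using True by (simp cong: sum.cong)
    thus ?thesis using F i j True by (simp add: P_def)
  next
    case False
    have "\<phi> (ev i) (ev j) m = 0" using coch_vsp[OF coch ev_vsp[OF i] ev_vsp[OF j] False] .
    moreover have "Qf I C F' i j m = 0" unfolding Qf_def F'_def using False Cs i j by simp
    ultimately show ?thesis by simp
  qed
  define f where "f v m = (\<Sum>a\<in>I. v a * F' a m)" for v m
  have lin: "lin_on I f"
    unfolding lin_on_def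
  proof (intro conjI ballI allI)
    fix x :: vec assume "x \<in> vsp I"
    show "f x \<in> vsp I" by (auto simp: vsp_def f_def F'_def)
  next
    fix x y :: vec
    show "f (vadd x y) = vadd (f x) (f y)"
      by (simp add: f_def vadd_def fun_eq_iff distrib_right sum.distrib)
  next
    fix c and x :: vec
    show "f (smul c x) = smul c (f x)"
      by (simp add: f_def smul_def fun_eq_iff sum_distrib_left mult.assoc)
  qed
  have "\<forall>x\<in>vsp I. \<forall>y\<in>vsp I. \<phi> x y = d1 (bil_ext I C) f x y"
  proof (intro ballI)
    fix x y assume x: "x \<in> vsp I" and y: "y \<in> vsp I"
    show "\<phi> x y = d1 (bil_ext I C) f x y"
    proof
      fix m
      have "\<phi> x y m = (\<Sum>i\<in>I. \<Sum>j\<in>I. x i * y j * \<phi> (ev i) (ev j) m)" using coch_expand[OF coch fin x y] .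
      also have "\<dots> = (\<Sum>i\<in>I. \<Sum>j\<in>I. x i * y j * Qf I C F' i j m)"
        using eqall by (simp cong: sum.cong)
      also have "\<dots> = d1 (bil_ext I C) f x y m"
        using d1_expand[of I C F' x y m] by (simp add: f_def[abs_def])
      finally show "\<phi> x y m = d1 (bil_ext I C) f x y m" .
    qed
  qed
  with lin show "\<exists>f. lin_on I f \<and> (\<forall>x\<in>vsp I. \<forall>y\<in>vsp I. \<phi> x y = d1 (bil_ext I C) f x y)" by blast
qed


lemma sum_if_r: "finite I \<Longrightarrow> m \<in> I \<Longrightarrow> (\<Sum>k\<in>I. g k * (if k = m then c k else 0)) = g m * (c m :: complex)"
proof -
  assume "finite I" "m \<in> I"
  have "(\<lambda>k. g k * (if k = m then c k else 0)) = (\<lambda>k. if k = m then g k * c k else 0)" by auto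
  thus ?thesis using \<open>finite I\<close> \<open>m \<in> I\<close> by (simp only: sum.delta) simp
qed

lemma sum_if_l: "finite I \<Longrightarrow> m \<in> I \<Longrightarrow> (\<Sum>k\<in>I. (if m = k then c k else 0) * g k) = c m * (g m :: complex)"
proof -
  assume "finite I" "m \<in> I"
  have "(\<lambda>k. (if m = k then c k else 0) * g k) = (\<lambda>k. if k = m then c k * g k else 0)" by auto
  thus ?thesis using \<open>finite I\<close> \<open>m \<in> I\<close> by (simp only: sum.delta) simp
qed

lemma key_t:
  fixes C P :: "nat \<Rightarrow> nat \<Rightarrow> nat \<Rightarrow> complex" and al :: "nat \<Rightarrow> int"
  assumes fin: "finite I" and tx: "tx \<in> I"
    and Cx: "\<forall>k m. k\<in>I \<longrightarrow> m\<in>I \<longrightarrow> C tx k m = (if k = m then - of_int (al k) else 0)"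
    and Pa: "\<forall>i j m. P i j m = - P j i m"
    and CE: "CEq I C P tx i j m = 0"
    and i: "i \<in> I" and j: "j \<in> I" and m: "m \<in> I"
  shows "of_int (al i + al j - al m) * P i j m = Qf I C (\<lambda>a k. P tx a k) i j m"
proof -
  have S1: "(\<Sum>k\<in>I. P i j k * C tx k m) = P i j m * (- of_int (al m))"
  proof -
    have "(\<Sum>k\<in>I. P i j k * C tx k m) = (\<Sum>k\<in>I. P i j k * (if k = m then - of_int (al k) else 0))"
      using Cx m by (intro sum.cong) auto
    thus ?thesis using sum_if_r[OF fin m] by simp
  qed
  have S4: "(\<Sum>k\<in>I. C tx i k * P k j m) = - of_int (al i) * P i j m"
  proof -
    have "(\<Sum>k\<in>I. C tx i k * P k j m) = (\<Sum>k\<in>I. (if i = k then - of_int (al k) else 0) * P k j m)"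
      using Cx i by (intro sum.cong) auto
    thus ?thesis using sum_if_l[OF fin i, of "\<lambda>k. - of_int (al k)"] by simp
  qed
  have S5: "(\<Sum>k\<in>I. C tx j k * P k i m) = - of_int (al j) * P j i m"
  proof -
    have "(\<Sum>k\<in>I. C tx j k * P k i m) = (\<Sum>k\<in>I. (if j = k then - of_int (al k) else 0) * P k i m)"
      using Cx j by (intro sum.cong) auto
    thus ?thesis using sum_if_l[OF fin j, of "\<lambda>k. - of_int (al k)"] by simp
  qed
  have S6: "(\<Sum>k\<in>I. C i j k * P k tx m) = - (\<Sum>k\<in>I. C i j k * P tx k m)"
  proof -
    have "(\<Sum>k\<in>I. C i j k * P k tx m) = (\<Sum>k\<in>I. - (C i j k * P tx k m))"
      by (rule sum.cong[OF refl]) (metis Pa mult_minus_right)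
    thus ?thesis by (simp add: sum_negf)
  qed
  have "P j i m = - P i j m" by (rule Pa[rule_format])
  with CE S1 S4 S5 S6 show ?thesis unfolding CEq_def Qf_def
    by (simp add: algebra_simps)
qed

lemma Qf_add: "Qf I C (\<lambda>a k. G a k + H a k) i j m = Qf I C G i j m + Qf I C H i j m"
  unfolding Qf_def by (simp add: distrib_right distrib_left sum.distrib)

lemma Qf_div:
  fixes C :: "nat \<Rightarrow> nat \<Rightarrow> nat \<Rightarrow> complex"
  assumes h: "\<forall>k\<in>I. (C i k m \<noteq> 0 \<longrightarrow> G j k = H j k / u) \<and> (C j k m \<noteq> 0 \<longrightarrow> G i k = H i k / u)
      \<and> (C i j k \<noteq> 0 \<longrightarrow> G k m = H k m / u)"
  shows "Qf I C G i j m = Qf I C H i j m / u"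
proof -
  have 1: "(\<Sum>k\<in>I. G j k * C i k m) = (\<Sum>k\<in>I. H j k * C i k m) / u"
    unfolding sum_divide_distrib using h by (intro sum.cong) auto
  have 2: "(\<Sum>k\<in>I. G i k * C j k m) = (\<Sum>k\<in>I. H i k * C j k m) / u"
    unfolding sum_divide_distrib using h by (intro sum.cong) auto
  have 3: "(\<Sum>k\<in>I. C i j k * G k m) = (\<Sum>k\<in>I. C i j k * H k m) / u"
    unfolding sum_divide_distrib using h by (intro sum.cong) auto
  show ?thesis unfolding Qf_def 1 2 3 by (simp add: diff_divide_distrib)
qed

lemma Qf_zero:
  fixes C :: "nat \<Rightarrow> nat \<Rightarrow> nat \<Rightarrow> complex"
  assumes h: "\<forall>k\<in>I. (C i k m \<noteq> 0 \<longrightarrow> G j k = 0) \<and> (C j k m \<noteq> 0 \<longrightarrow> G i k = 0)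
      \<and> (C i j k \<noteq> 0 \<longrightarrow> G k m = 0)"
  shows "Qf I C G i j m = 0"
proof -
  have "Qf I C G i j m = Qf I C (\<lambda>a k. 0) i j m / 1"
    by (rule Qf_div) (use h in auto)
  thus ?thesis by (simp add: Qf_def)
qed

lemma weight_reduce:
  fixes C P :: "nat \<Rightarrow> nat \<Rightarrow> nat \<Rightarrow> complex" and al be :: "nat \<Rightarrow> int"
  assumes fin: "finite I" and tx: "tx \<in> I" and ty: "ty \<in> I"
    and Cw: "\<forall>i k m. i\<in>I \<longrightarrow> k\<in>I \<longrightarrow> m\<in>I \<longrightarrow> C i k m \<noteq> 0 \<longrightarrow> al i + al k = al m \<and> be i + be k = be m"
    and Cx: "\<forall>k m. k\<in>I \<longrightarrow> m\<in>I \<longrightarrow> C tx k m = (if k = m then - of_int (al k) else 0)"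
    and Cy: "\<forall>k m. k\<in>I \<longrightarrow> m\<in>I \<longrightarrow> C ty k m = (if k = m then - of_int (be k) else 0)"
    and Pa: "\<forall>i j m. P i j m = - P j i m"
    and PCE: "\<forall>a b c m. a\<in>I \<longrightarrow> b\<in>I \<longrightarrow> c\<in>I \<longrightarrow> m\<in>I \<longrightarrow> CEq I C P a b c m = 0"
    and F0s: "\<forall>a k. a\<in>I \<longrightarrow> k\<in>I \<longrightarrow> F0 a k \<noteq> 0 \<longrightarrow> al a = al k \<and> be a = be k"
    and F0e: "\<forall>i j m. i\<in>I \<longrightarrow> j\<in>I \<longrightarrow> m\<in>I \<longrightarrow> al i + al j = al m \<longrightarrow> be i + be j = be m \<longrightarrow> P i j m = Qf I C F0 i j m"
  shows "\<exists>F. \<forall>i j m. i\<in>I \<longrightarrow> j\<in>I \<longrightarrow> m\<in>I \<longrightarrow> P i j m = Qf I C F i j m"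
proof -
  define g where "g a k = (if al a \<noteq> al k then P tx a k / of_int (al a - al k)
     else if be a \<noteq> be k then P ty a k / of_int (be a - be k) else 0)" for a k
  have main: "P i j m = Qf I C (\<lambda>a k. g a k + F0 a k) i j m" if i: "i\<in>I" and j: "j\<in>I" and m: "m\<in>I" for i j m
  proof -
    have kx: "of_int (al i + al j - al m) * P i j m = Qf I C (\<lambda>a k. P tx a k) i j m"
      using key_t[OF fin tx Cx Pa PCE[rule_format, OF tx i j m] i j m] .
    have ky: "of_int (be i + be j - be m) * P i j m = Qf I C (\<lambda>a k. P ty a k) i j m"
      using key_t[OF fin ty Cy Pa PCE[rule_format, OF ty i j m] i j m] .
    have w: "\<And>k. k \<in> I \<Longrightarrow> (C i k m \<noteq> 0 \<longrightarrow> al i + al k = al m \<and> be i + be k = be m)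
        \<and> (C j k m \<noteq> 0 \<longrightarrow> al j + al k = al m \<and> be j + be k = be m)
        \<and> (C i j k \<noteq> 0 \<longrightarrow> al i + al j = al k \<and> be i + be j = be k)"
    proof -
      fix k assume k: "k \<in> I"
      show "?thesis k" using Cw[rule_format, OF i k m] Cw[rule_format, OF j k m] Cw[rule_format, OF i j k] by blast
    qed
    show ?thesis
    proof (cases "al i + al j = al m \<and> be i + be j = be m")
      case True
      have "Qf I C g i j m = 0"
      proof (rule Qf_zero, intro ballI)
        fix k assume k: "k \<in> I"
        show "(C i k m \<noteq> 0 \<longrightarrow> g j k = 0) \<and> (C j k m \<noteq> 0 \<longrightarrow> g i k = 0) \<and> (C i j k \<noteq> 0 \<longrightarrow> g k m = 0)"
          using w[OF k] True unfolding g_def by auto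
      qed
      thus ?thesis using F0e i j m True by (simp add: Qf_add)
    next
      case False
      have z: "Qf I C F0 i j m = 0"
      proof (rule Qf_zero, intro ballI)
        fix k assume k: "k \<in> I"
        have f1: "F0 j k \<noteq> 0 \<Longrightarrow> al j = al k \<and> be j = be k" using F0s j k by blast
        have f2: "F0 i k \<noteq> 0 \<Longrightarrow> al i = al k \<and> be i = be k" using F0s i k by blast
        have f3: "F0 k m \<noteq> 0 \<Longrightarrow> al k = al m \<and> be k = be m" using F0s k m by blast
        show "(C i k m \<noteq> 0 \<longrightarrow> F0 j k = 0) \<and> (C j k m \<noteq> 0 \<longrightarrow> F0 i k = 0) \<and> (C i j k \<noteq> 0 \<longrightarrow> F0 k m = 0)"
        proof (intro conjI impI)
          assume "C i k m \<noteq> 0" thus "F0 j k = 0" using w[OF k] False f1 by (cases "F0 j k = 0") auto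
        next
          assume "C j k m \<noteq> 0" thus "F0 i k = 0" using w[OF k] False f2 by (cases "F0 i k = 0") auto
        next
          assume "C i j k \<noteq> 0" thus "F0 k m = 0" using w[OF k] False f3 by (cases "F0 k m = 0") auto
        qed
      qed
      have "Qf I C g i j m = P i j m"
      proof (cases "al i + al j = al m")
        case False
        let ?u = "of_int (al i + al j - al m) :: complex"
        have "al i + al j - al m \<noteq> 0" using False by simp
        hence u: "?u \<noteq> 0" unfolding of_int_eq_0_iff .
        have "Qf I C g i j m = Qf I C (\<lambda>a k. P tx a k) i j m / ?u"
        proof (rule Qf_div, intro ballI)
          fix k assume k: "k \<in> I"
          show "(C i k m \<noteq> 0 \<longrightarrow> g j k = P tx j k / ?u) \<and> (C j k m \<noteq> 0 \<longrightarrow> g i k = P tx i k / ?u) \<and> (C i j k \<noteq> 0 \<longrightarrow> g k m = P tx k m / ?u)"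
          proof (intro conjI impI)
            assume "C i k m \<noteq> 0" hence e: "al j - al k = al i + al j - al m" using w[OF k] by auto
            hence ne: "al j \<noteq> al k" using False by auto
            hence "g j k = P tx j k / of_int (al j - al k)" unfolding g_def by simp
            thus "g j k = P tx j k / ?u" by (simp only: e)
          next
            assume "C j k m \<noteq> 0" hence e: "al i - al k = al i + al j - al m" using w[OF k] by auto
            hence ne: "al i \<noteq> al k" using False by auto
            hence "g i k = P tx i k / of_int (al i - al k)" unfolding g_def by simp
            thus "g i k = P tx i k / ?u" by (simp only: e)
          next
            assume "C i j k \<noteq> 0" hence e: "al k - al m = al i + al j - al m" using w[OF k] by auto
            hence ne: "al k \<noteq> al m" using False by auto
            hence "g k m = P tx k m / of_int (al k - al m)" unfolding g_def by simp
            thus "g k m = P tx k m / ?u" by (simp only: e)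
          qed
        qed
        hence "Qf I C g i j m = (?u * P i j m) / ?u" by (simp only: kx[symmetric])
        thus ?thesis using u by (metis nonzero_mult_div_cancel_left)
      next
        case True
        hence bb: "be i + be j \<noteq> be m" using \<open>\<not> (al i + al j = al m \<and> be i + be j = be m)\<close> by blast
        let ?u = "of_int (be i + be j - be m) :: complex"
        have "be i + be j - be m \<noteq> 0" using bb by simp
        hence u: "?u \<noteq> 0" unfolding of_int_eq_0_iff .
        have "Qf I C g i j m = Qf I C (\<lambda>a k. P ty a k) i j m / ?u"
        proof (rule Qf_div, intro ballI)
          fix k assume k: "k \<in> I"
          show "(C i k m \<noteq> 0 \<longrightarrow> g j k = P ty j k / ?u) \<and> (C j k m \<noteq> 0 \<longrightarrow> g i k = P ty i k / ?u) \<and> (C i j k \<noteq> 0 \<longrightarrow> g k m = P ty k m / ?u)"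
          proof (intro conjI impI)
            assume "C i k m \<noteq> 0" hence e0: "al j = al k" and e: "be j - be k = be i + be j - be m" using w[OF k] True by auto
            hence ne: "be j \<noteq> be k" using bb by auto
            hence "g j k = P ty j k / of_int (be j - be k)" using e0 unfolding g_def by simp
            thus "g j k = P ty j k / ?u" by (simp only: e)
          next
            assume "C j k m \<noteq> 0" hence e0: "al i = al k" and e: "be i - be k = be i + be j - be m" using w[OF k] True by auto
            hence ne: "be i \<noteq> be k" using bb by auto
            hence "g i k = P ty i k / of_int (be i - be k)" using e0 unfolding g_def by simp
            thus "g i k = P ty i k / ?u" by (simp only: e)
          next
            assume "C i j k \<noteq> 0" hence e0: "al k = al m" and e: "be k - be m = be i + be j - be m" using w[OF k] True by auto
            hence ne: "be k \<noteq> be m" using bb by auto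
            hence "g k m = P ty k m / of_int (be k - be m)" using e0 unfolding g_def by simp
            thus "g k m = P ty k m / ?u" by (simp only: e)
          qed
        qed
        hence "Qf I C g i j m = (?u * P i j m) / ?u" by (simp only: ky[symmetric])
        thus ?thesis using u by (metis nonzero_mult_div_cancel_left)
      qed
      thus ?thesis using z by (simp add: Qf_add)
    qed
  qed
  thus ?thesis by blast
qed


lemma Qf_cong:
  assumes "\<forall>a\<in>I. \<forall>k\<in>I. G a k = G' a k" "i \<in> I" "j \<in> I" "m \<in> I"
  shows "Qf I C G i j m = Qf I C G' i j m"
  unfolding Qf_def using assms by (simp cong: sum.cong)

lemma wz_reduce:
  fixes C :: "nat \<Rightarrow> nat \<Rightarrow> nat \<Rightarrow> complex" and al be :: "nat \<Rightarrow> int"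
  assumes Cw: "\<forall>i k m. i\<in>I \<longrightarrow> k\<in>I \<longrightarrow> m\<in>I \<longrightarrow> C i k m \<noteq> 0 \<longrightarrow> al i + al k = al m \<and> be i + be k = be m"
    and i: "i \<in> I" and j: "j \<in> I" and m: "m \<in> I"
    and wa: "al i + al j = al m" and wb: "be i + be j = be m"
  shows "Qf I C G i j m = Qf I C (\<lambda>a k. if al a = al k \<and> be a = be k then G a k else 0) i j m"
  unfolding Qf_def
proof -
  have 1: "(\<Sum>k\<in>I. G j k * C i k m) = (\<Sum>k\<in>I. (if al j = al k \<and> be j = be k then G j k else 0) * C i k m)"
  proof (rule sum.cong[OF refl])
    fix k assume k: "k \<in> I"
    show "G j k * C i k m = (if al j = al k \<and> be j = be k then G j k else 0) * C i k m"
      using Cw[rule_format, OF i k m] wa wb by (cases "C i k m = 0") auto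
  qed
  have 2: "(\<Sum>k\<in>I. G i k * C j k m) = (\<Sum>k\<in>I. (if al i = al k \<and> be i = be k then G i k else 0) * C j k m)"
  proof (rule sum.cong[OF refl])
    fix k assume k: "k \<in> I"
    show "G i k * C j k m = (if al i = al k \<and> be i = be k then G i k else 0) * C j k m"
      using Cw[rule_format, OF j k m] wa wb by (cases "C j k m = 0") auto
  qed
  have 3: "(\<Sum>k\<in>I. C i j k * G k m) = (\<Sum>k\<in>I. C i j k * (if al k = al m \<and> be k = be m then G k m else 0))"
  proof (rule sum.cong[OF refl])
    fix k assume k: "k \<in> I"
    show "C i j k * G k m = C i j k * (if al k = al m \<and> be k = be m then G k m else 0)"
      using Cw[rule_format, OF i j k] wa wb by (cases "C i j k = 0") auto
  qed
  show "(\<Sum>k\<in>I. G j k * C i k m) - (\<Sum>k\<in>I. G i k * C j k m) - (\<Sum>k\<in>I. C i j k * G k m) =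
    (\<Sum>k\<in>I. (if al j = al k \<and> be j = be k then G j k else 0) * C i k m) -
    (\<Sum>k\<in>I. (if al i = al k \<and> be i = be k then G i k else 0) * C j k m) -
    (\<Sum>k\<in>I. C i j k * (if al k = al m \<and> be k = be m then G k m else 0))"
    using 1 2 3 by simp
qed

definition F0form :: "nat \<Rightarrow> nat \<Rightarrow> (nat \<Rightarrow> complex) \<Rightarrow> complex \<Rightarrow> complex \<Rightarrow> nat \<Rightarrow> nat \<Rightarrow> complex" where
  "F0form p q D r s a k = (if a = k then D a else 0) + (if a = p \<and> k = q then r else 0) + (if a = q \<and> k = p then s else 0)"

lemma Qf_delta:
  fixes C :: "nat \<Rightarrow> nat \<Rightarrow> nat \<Rightarrow> complex"
  assumes fin: "finite I" and p: "p \<in> I" and q: "q \<in> I" and i: "i \<in> I" and j: "j \<in> I" and m: "m \<in> I"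
  shows "Qf I C (\<lambda>a k. if a = p \<and> k = q then r else 0) i j m =
     r * ((if j = p then C i q m else 0) - (if i = p then C j q m else 0) - (if m = q then C i j p else 0))"
proof -
  have 1: "(\<Sum>k\<in>I. (if j = p \<and> k = q then r else 0) * C i k m) = (if j = p then r * C i q m else 0)"
  proof (cases "j = p")
    case True
    have "(\<Sum>k\<in>I. (if j = p \<and> k = q then r else 0) * C i k m) = (\<Sum>k\<in>I. if k = q then r * C i k m else 0)"
      using True by (intro sum.cong) auto
    thus ?thesis using fin q True by (simp only: sum.delta) simp
  qed simp
  have 2: "(\<Sum>k\<in>I. (if i = p \<and> k = q then r else 0) * C j k m) = (if i = p then r * C j q m else 0)"
  proof (cases "i = p")
    case True
    have "(\<Sum>k\<in>I. (if i = p \<and> k = q then r else 0) * C j k m) = (\<Sum>k\<in>I. if k = q then r * C j k m else 0)"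
      using True by (intro sum.cong) auto
    thus ?thesis using fin q True by (simp only: sum.delta) simp
  qed simp
  have 3: "(\<Sum>k\<in>I. C i j k * (if k = p \<and> m = q then r else 0)) = (if m = q then r * C i j p else 0)"
  proof (cases "m = q")
    case True
    have "(\<Sum>k\<in>I. C i j k * (if k = p \<and> m = q then r else 0)) = (\<Sum>k\<in>I. if k = p then r * C i j k else 0)"
      using True by (intro sum.cong) auto
    thus ?thesis using fin p True by (simp only: sum.delta) simp
  qed simp
  show ?thesis unfolding Qf_def 1 2 3 by (simp add: algebra_simps)
qed

lemma Qf_diag:
  fixes C :: "nat \<Rightarrow> nat \<Rightarrow> nat \<Rightarrow> complex"
  assumes fin: "finite I" and i: "i \<in> I" and j: "j \<in> I" and m: "m \<in> I"
    and anti: "C j i m = - C i j m"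
  shows "Qf I C (\<lambda>a k. if a = k then D a else 0) i j m = C i j m * (D i + D j - D m)"
proof -
  have 1: "(\<Sum>k\<in>I. (if j = k then D j else 0) * C i k m) = D j * C i j m"
    using sum_if_l[OF fin j, of "\<lambda>k. D j" "\<lambda>k. C i k m"] by simp
  have 2: "(\<Sum>k\<in>I. (if i = k then D i else 0) * C j k m) = D i * C j i m"
    using sum_if_l[OF fin i, of "\<lambda>k. D i" "\<lambda>k. C j k m"] by simp
  have 3: "(\<Sum>k\<in>I. C i j k * (if k = m then D k else 0)) = C i j m * D m"
    using sum_if_r[OF fin m] by simp
  show ?thesis unfolding Qf_def 1 2 3 anti by (simp add: algebra_simps)
qed

lemma Qf_F0form:
  fixes C :: "nat \<Rightarrow> nat \<Rightarrow> nat \<Rightarrow> complex"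
  assumes fin: "finite I" and p: "p \<in> I" and q: "q \<in> I" and i: "i \<in> I" and j: "j \<in> I" and m: "m \<in> I"
    and anti: "C j i m = - C i j m"
  shows "Qf I C (F0form p q D r s) i j m = C i j m * (D i + D j - D m)
     + r * ((if j = p then C i q m else 0) - (if i = p then C j q m else 0) - (if m = q then C i j p else 0))
     + s * ((if j = q then C i p m else 0) - (if i = q then C j p m else 0) - (if m = p then C i j q else 0))"
proof -
  have "F0form p q D r s = (\<lambda>a k. (if a = k then D a else 0) + (if a = p \<and> k = q then r else 0) + (if a = q \<and> k = p then s else 0))"
    by (simp add: F0form_def fun_eq_iff)
  hence "Qf I C (F0form p q D r s) i j m = Qf I C (\<lambda>a k. if a = k then D a else 0) i j m
     + Qf I C (\<lambda>a k. if a = p \<and> k = q then r else 0) i j m + Qf I C (\<lambda>a k. if a = q \<and> k = p then s else 0) i j m"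
    by (simp only: Qf_add)
  thus ?thesis by (simp only: Qf_diag[where C=C and D=D, OF fin i j m anti] Qf_delta[where C=C and r=r, OF fin p q i j m] Qf_delta[where C=C and r=s, OF fin q p i j m])
qed

lemma Qf_anti:
  fixes C :: "nat \<Rightarrow> nat \<Rightarrow> nat \<Rightarrow> complex"
  assumes anti: "\<forall>k. C j i k = - C i j k"
  shows "Qf I C G j i m = - Qf I C G i j m"
  unfolding Qf_def using anti by (simp add: sum_negf)

lemma sum_single:
  assumes "finite I" "j0 \<in> I" "\<forall>j\<in>I. j \<noteq> j0 \<longrightarrow> f j = 0"
  shows "sum f I = (f j0 :: complex)"
proof -
  have "sum f I = f j0 + sum f (I - {j0})" using assms by (simp add: sum.remove)
  moreover have "sum f (I - {j0}) = 0" using assms by (intro sum.neutral) auto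
  ultimately show ?thesis by simp
qed

lemma sum_none:
  assumes "\<forall>j\<in>I. f j = 0"
  shows "sum f I = (0 :: complex)"
  using assms by simp


definition al2 :: "nat \<Rightarrow> nat \<Rightarrow> int" where
  "al2 n i = (if i = 1 then 1 else if 2 \<le> i \<and> i \<le> n - 1 then int i - 2 else if i = n then 2 else 0)"
definition be2 :: "nat \<Rightarrow> nat \<Rightarrow> int" where
  "be2 n i = (if 2 \<le> i \<and> i \<le> n - 1 then 1 else 0)"

lemma C_anti: "antisym_tab T j i m = - antisym_tab T i j m"
  by (simp add: antisym_tab_def vsub_def)

lemma tab2_supp: "n > 5 \<Longrightarrow> tab2 n i j m \<noteq> 0 \<Longrightarrow> 1 \<le> m \<and> m \<le> n + 2"
  by (auto simp: tab2_def ev_def smul_def vzero_def split: if_splits)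

lemma tab2_w: "n > 5 \<Longrightarrow> tab2 n i j m \<noteq> 0 \<Longrightarrow> al2 n i + al2 n j = al2 n m \<and> be2 n i + be2 n j = be2 n m"
  by (auto simp: tab2_def ev_def smul_def vzero_def al2_def be2_def split: if_splits)


lemma tab2_x0: "n > 5 \<Longrightarrow> tab2 n (n+1) k m = 0"
  by (auto simp: tab2_def vzero_def)
lemma tab2_y0: "n > 5 \<Longrightarrow> tab2 n (n+2) k m = 0"
  by (auto simp: tab2_def vzero_def)
lemma tab2_kx: "n > 5 \<Longrightarrow> 1 \<le> k \<Longrightarrow> k \<le> n+2 \<Longrightarrow> tab2 n k (n+1) m = (if k = m then of_int (al2 n k) else 0)"
  by (auto simp: tab2_def vzero_def ev_def smul_def al2_def)
lemma tab2_ky: "n > 5 \<Longrightarrow> 1 \<le> k \<Longrightarrow> k \<le> n+2 \<Longrightarrow> tab2 n k (n+2) m = (if k = m then of_int (be2 n k) else 0)"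
  by (auto simp: tab2_def vzero_def ev_def smul_def be2_def)
lemma tab2_1j: "n > 5 \<Longrightarrow> 2 \<le> j \<Longrightarrow> j \<le> n - 2 \<Longrightarrow> tab2 n 1 j (j+1) = 1"
  by (auto simp: tab2_def ev_def)
lemma tab2_j1: "n > 5 \<Longrightarrow> 2 \<le> j \<Longrightarrow> j \<le> n - 2 \<Longrightarrow> tab2 n j 1 (j+1) = 0"
  by (auto simp: tab2_def ev_def vzero_def)
lemma tab2_kn: "n > 5 \<Longrightarrow> 2 \<le> k \<Longrightarrow> k \<le> n - 3 \<Longrightarrow> tab2 n k n (k+2) = 1"
  by (auto simp: tab2_def ev_def)
lemma tab2_nk: "n > 5 \<Longrightarrow> 2 \<le> k \<Longrightarrow> k \<le> n - 3 \<Longrightarrow> tab2 n n k (k+2) = 0"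
  by (auto simp: tab2_def ev_def vzero_def)

lemma C2_def': "antisym_tab (tab2 n) i j m = tab2 n i j m - tab2 n j i m"
  by (simp add: antisym_tab_def vsub_def)

lemma C2_x: "n > 5 \<Longrightarrow> k \<in> idxR n \<Longrightarrow> antisym_tab (tab2 n) (n+1) k m = (if k = m then - of_int (al2 n k) else 0)"
  using tab2_x0[of n k m] tab2_x0[of n m m] tab2_kx[of n k m] by (simp add: C2_def' idxR_def)
lemma C2_y: "n > 5 \<Longrightarrow> k \<in> idxR n \<Longrightarrow> antisym_tab (tab2 n) (n+2) k m = (if k = m then - of_int (be2 n k) else 0)"
  using tab2_y0[of n k m] tab2_y0[of n m m] tab2_ky[of n k m] by (simp add: C2_def' idxR_def)
lemma C2_1j: "n > 5 \<Longrightarrow> 2 \<le> j \<Longrightarrow> j \<le> n - 2 \<Longrightarrow> antisym_tab (tab2 n) 1 j (j+1) = 1"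
  using tab2_1j[of n j] tab2_j1[of n j] by (simp add: C2_def')
lemma C2_kn: "n > 5 \<Longrightarrow> 2 \<le> k \<Longrightarrow> k \<le> n - 3 \<Longrightarrow> antisym_tab (tab2 n) k n (k+2) = 1"
  using tab2_kn[of n k] tab2_nk[of n k] by (simp add: C2_def')
lemma C2_supp: "n > 5 \<Longrightarrow> m \<notin> idxR n \<Longrightarrow> antisym_tab (tab2 n) a b m = 0"
proof -
  assume n: "n > 5" and m: "m \<notin> idxR n"
  have "tab2 n a b m = 0" using tab2_supp[OF n, of a b m] m by (auto simp: idxR_def)
  moreover have "tab2 n b a m = 0" using tab2_supp[OF n, of b a m] m by (auto simp: idxR_def)
  ultimately show ?thesis by (simp add: C2_def')
qed
lemma C2_w: "n > 5 \<Longrightarrow> antisym_tab (tab2 n) i k m \<noteq> 0 \<Longrightarrow> al2 n i + al2 n k = al2 n m \<and> be2 n i + be2 n k = be2 n m"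
proof -
  assume n: "n > 5" and h: "antisym_tab (tab2 n) i k m \<noteq> 0"
  hence "tab2 n i k m \<noteq> 0 \<or> tab2 n k i m \<noteq> 0" by (auto simp: C2_def')
  thus ?thesis using tab2_w[OF n, of i k m] tab2_w[OF n, of k i m] by (metis add.commute)
qed


lemma inj2: "n > 5 \<Longrightarrow> a \<in> idxR n \<Longrightarrow> k \<in> idxR n \<Longrightarrow> al2 n a = al2 n k \<Longrightarrow> be2 n a = be2 n k \<Longrightarrow>
   a = k \<or> (a \<in> {n+1, n+2} \<and> k \<in> {n+1, n+2})"
  by (auto simp: al2_def be2_def idxR_def split: if_splits)

lemma al2_x: "n > 5 \<Longrightarrow> al2 n (Suc n) = 0" "n > 5 \<Longrightarrow> al2 n (Suc (Suc n)) = 0" "n > 5 \<Longrightarrow> be2 n (Suc n) = 0" "n > 5 \<Longrightarrow> be2 n (Suc (Suc n)) = 0"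
  by (auto simp: al2_def be2_def)

lemma fin_idx: "finite (idxR n)" by (simp add: idxR_def)

lemma G_reduce2:
  assumes n: "n > 5" and i: "i \<in> idxR n" and j: "j \<in> idxR n" and m: "m \<in> idxR n"
    and wa: "al2 n i + al2 n j = al2 n m" and wb: "be2 n i + be2 n j = be2 n m"
  shows "Qf (idxR n) (antisym_tab (tab2 n)) G i j m =
    Qf (idxR n) (antisym_tab (tab2 n)) (F0form (n+1) (n+2) (\<lambda>a. G a a) (G (n+1) (n+2)) (G (n+2) (n+1))) i j m"
proof -
  have Cw: "\<forall>i k m. i\<in>idxR n \<longrightarrow> k\<in>idxR n \<longrightarrow> m\<in>idxR n \<longrightarrow> antisym_tab (tab2 n) i k m \<noteq> 0 \<longrightarrow>
     al2 n i + al2 n k = al2 n m \<and> be2 n i + be2 n k = be2 n m" using C2_w[OF n] by blast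
  have "Qf (idxR n) (antisym_tab (tab2 n)) G i j m = Qf (idxR n) (antisym_tab (tab2 n))
     (\<lambda>a k. if al2 n a = al2 n k \<and> be2 n a = be2 n k then G a k else 0) i j m"
    by (rule wz_reduce[OF Cw i j m wa wb])
  also have "\<dots> = Qf (idxR n) (antisym_tab (tab2 n)) (F0form (n+1) (n+2) (\<lambda>a. G a a) (G (n+1) (n+2)) (G (n+2) (n+1))) i j m"
  proof (rule Qf_cong[OF _ i j m], intro ballI)
    fix a k assume a: "a \<in> idxR n" and k: "k \<in> idxR n"
    show "(if al2 n a = al2 n k \<and> be2 n a = be2 n k then G a k else 0) = F0form (n+1) (n+2) (\<lambda>a. G a a) (G (n+1) (n+2)) (G (n+2) (n+1)) a k"
    proof (cases "al2 n a = al2 n k \<and> be2 n a = be2 n k")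
      case True
      hence "a = k \<or> (a \<in> {n+1, n+2} \<and> k \<in> {n+1, n+2})" using inj2[OF n a k] by blast
      thus ?thesis using True by (auto simp: F0form_def)
    next
      case False
      hence "a \<noteq> k" by auto
      moreover have "\<not> (a = n+1 \<and> k = n+2)" "\<not> (a = n+2 \<and> k = n+1)" using False n by (auto simp: al2_x[OF n])
      ultimately show ?thesis using False by (auto simp: F0form_def)
    qed
  qed
  finally show ?thesis .
qed

lemma C2a: "antisym_tab (tab2 n) j i m = - antisym_tab (tab2 n) i j m" by (rule C_anti)

lemma mem2: "n > 5 \<Longrightarrow> 1 \<le> k \<Longrightarrow> k \<le> n + 2 \<Longrightarrow> k \<in> idxR n" by (simp add: idxR_def)

lemma Q2_1k:
  assumes n: "n > 5" and k: "2 \<le> k" "k \<le> n - 2"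
  shows "Qf (idxR n) (antisym_tab (tab2 n)) (F0form (n+1) (n+2) D r s) 1 k (k+1) = D 1 + D k - D (k+1)"
proof -
  have "k \<noteq> n" "k \<noteq> n + 1" "k \<noteq> n+2" "k + 1 \<noteq> n+1" "k+1 \<noteq> n+2" using n k by auto
  thus ?thesis
  using Qf_F0form[where C="antisym_tab (tab2 n)" and D=D and r=r and s=s, OF fin_idx mem2[OF n, of "n+1"] mem2[OF n, of "n+2"] mem2[OF n, of 1] mem2[OF n, of k] mem2[OF n, of "k+1"] C2a]
    C2_1j[OF n k] n k by simp
qed

lemma Q2_kn:
  assumes n: "n > 5" and k: "2 \<le> k" "k \<le> n - 3"
  shows "Qf (idxR n) (antisym_tab (tab2 n)) (F0form (n+1) (n+2) D r s) k n (k+2) = D k + D n - D (k+2)"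
proof -
  have "k \<noteq> n" "k \<noteq> n + 1" "k \<noteq> n+2" "k + 2 \<noteq> n+1" "k+2 \<noteq> n+2" "Suc k \<noteq> n" using n k by auto
  thus ?thesis
  using Qf_F0form[where C="antisym_tab (tab2 n)" and D=D and r=r and s=s, OF fin_idx mem2[OF n, of "n+1"] mem2[OF n, of "n+2"] mem2[OF n, of k] mem2[OF n, of n] mem2[OF n, of "k+2"] C2a]
    C2_kn[OF n k] n k by simp
qed

lemma Q2_xa:
  assumes n: "n > 5" and a: "1 \<le> a" "a \<le> n"
  shows "Qf (idxR n) (antisym_tab (tab2 n)) (F0form (n+1) (n+2) D r s) (n+1) a a = - of_int (al2 n a) * D (n+1) - of_int (be2 n a) * r"
proof -
  have x: "antisym_tab (tab2 n) (n+1) a a = - of_int (al2 n a)" using C2_x[OF n mem2[OF n a(1)]] a by simp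
  have y: "antisym_tab (tab2 n) a (n+2) a = of_int (be2 n a)" using C2_y[OF n mem2[OF n a(1)]] a C2a[of n "n+2" a a] by simp
  show ?thesis
  using Qf_F0form[where C="antisym_tab (tab2 n)" and D=D and r=r and s=s, OF fin_idx mem2[OF n, of "n+1"] mem2[OF n, of "n+2"] mem2[OF n, of "n+1"] mem2[OF n, of a] mem2[OF n, of a] C2a]
    x y n a by (simp add: algebra_simps)
qed

lemma Q2_ya:
  assumes n: "n > 5" and a: "1 \<le> a" "a \<le> n"
  shows "Qf (idxR n) (antisym_tab (tab2 n)) (F0form (n+1) (n+2) D r s) (n+2) a a = - of_int (be2 n a) * D (n+2) - of_int (al2 n a) * s"
proof -
  have y: "antisym_tab (tab2 n) (n+2) a a = - of_int (be2 n a)" using C2_y[OF n mem2[OF n a(1)]] a by simp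
  have x: "antisym_tab (tab2 n) a (n+1) a = of_int (al2 n a)" using C2_x[OF n mem2[OF n a(1)]] a C2a[of n "n+1" a a] by simp
  show ?thesis
  using Qf_F0form[where C="antisym_tab (tab2 n)" and D=D and r=r and s=s, OF fin_idx mem2[OF n, of "n+1"] mem2[OF n, of "n+2"] mem2[OF n, of "n+2"] mem2[OF n, of a] mem2[OF n, of a] C2a]
    x y n a by (simp add: algebra_simps)
qed

lemma C2_t0:
  assumes n: "n > 5" and t: "t \<in> {n+1,n+2}" and k: "k \<in> idxR n" and m: "m \<in> {n+1,n+2}"
  shows "antisym_tab (tab2 n) t k m = 0"
proof -
  have a: "al2 n m = 0" "be2 n m = 0" using m n by (auto simp: al2_def be2_def)
  show ?thesis using t C2_x[OF n k, of m] C2_y[OF n k, of m] a by auto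
qed

lemma C2_t0':
  assumes n: "n > 5" and t: "t \<in> {n+1,n+2}" and j: "j \<in> {n+1,n+2}" and k: "k \<in> idxR n"
  shows "antisym_tab (tab2 n) t j k = 0"
proof -
  have jI: "j \<in> idxR n" using j by (auto simp: idxR_def)
  have a: "al2 n j = 0" "be2 n j = 0" using j n by (auto simp: al2_def be2_def)
  show ?thesis using t C2_x[OF n jI, of k] C2_y[OF n jI, of k] a by auto
qed

lemma Q2_tt:
  assumes n: "n > 5" and t: "i \<in> {n+1,n+2}" "j \<in> {n+1,n+2}" "m \<in> {n+1,n+2}"
  shows "Qf (idxR n) (antisym_tab (tab2 n)) G i j m = 0"
proof -
  have "\<forall>k\<in>idxR n. antisym_tab (tab2 n) i k m = 0" using C2_t0[OF n t(1) _ t(3)] by blast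
  moreover have "\<forall>k\<in>idxR n. antisym_tab (tab2 n) j k m = 0" using C2_t0[OF n t(2) _ t(3)] by blast
  moreover have "\<forall>k\<in>idxR n. antisym_tab (tab2 n) i j k = 0" using C2_t0'[OF n t(1) t(2)] by blast
  ultimately show ?thesis unfolding Qf_def by simp
qed


lemma wz2_e:
  assumes n: "n > 5" and i: "1 \<le> i" "i \<le> n" and j: "1 \<le> j" "j \<le> n" and m: "1 \<le> m" "m \<le> n + 2"
    and ij: "i \<noteq> j" and wa: "al2 n i + al2 n j = al2 n m" and wb: "be2 n i + be2 n j = be2 n m"
  shows "(i = 1 \<and> 2 \<le> j \<and> j \<le> n-2 \<and> m = j+1) \<or> (j = 1 \<and> 2 \<le> i \<and> i \<le> n-2 \<and> m = i+1)
    \<or> (j = n \<and> 2 \<le> i \<and> i \<le> n-3 \<and> m = i+2) \<or> (i = n \<and> 2 \<le> j \<and> j \<le> n-3 \<and> m = j+2)"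
  using assms by (auto simp: al2_def be2_def split: if_splits)

lemma wz2_t:
  assumes n: "n > 5" and i: "i \<in> {n+1,n+2}" and j: "j \<in> idxR n" and m: "m \<in> idxR n"
    and wa: "al2 n i + al2 n j = al2 n m" and wb: "be2 n i + be2 n j = be2 n m"
  shows "(j \<le> n \<and> m = j) \<or> (j \<in> {n+1,n+2} \<and> m \<in> {n+1,n+2})"
proof -
  have "al2 n i = 0" "be2 n i = 0" using i al2_x[OF n] by auto
  hence "al2 n j = al2 n m" "be2 n j = be2 n m" using wa wb by auto
  from inj2[OF n j m this] show ?thesis using j by (auto simp: idxR_def)
qed

lemma CE2:
  fixes P :: "nat \<Rightarrow> nat \<Rightarrow> nat \<Rightarrow> complex"
  assumes n: "n > 5" and k: "2 \<le> k" "k \<le> n - 4" and Pa: "\<forall>i j m. P i j m = - P j i m"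
  shows "CEq (idxR n) (antisym_tab (tab2 n)) P 1 k n (k+3) =
     P k n (k+2) - P 1 k (k+1) - P (k+1) n (k+3) + P 1 (k+2) (k+3)"
proof -
  let ?I = "idxR n" and ?C = "antisym_tab (tab2 n)"
  have W: "\<And>a b c. ?C a b c \<noteq> 0 \<Longrightarrow> al2 n a + al2 n b = al2 n c \<and> be2 n a + be2 n b = be2 n c"
    using C2_w[OF n] by blast
  have mem: "\<And>t. 1 \<le> t \<Longrightarrow> t \<le> n + 2 \<Longrightarrow> t \<in> ?I" by (simp add: idxR_def)
  have u1: "\<forall>j\<in>?I. j \<noteq> k+2 \<longrightarrow> P k n j * ?C 1 j (k+3) = 0"
  proof (intro ballI impI)
    fix j assume jI: "j \<in> ?I" "j \<noteq> k+2"
    have "?C 1 j (k+3) = 0"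
    proof (rule ccontr)
      assume "?C 1 j (k+3) \<noteq> 0"
      from W[OF this] show False using jI n k by (auto simp: al2_def be2_def idxR_def split: if_splits)
    qed
    thus "P k n j * ?C 1 j (k+3) = 0" by simp
  qed
  have u2: "\<forall>j\<in>?I. P 1 n j * ?C k j (k+3) = 0"
  proof (intro ballI)
    fix j assume jI: "j \<in> ?I"
    have "?C k j (k+3) = 0"
    proof (rule ccontr)
      assume "?C k j (k+3) \<noteq> 0"
      from W[OF this] show False using jI n k by (auto simp: al2_def be2_def idxR_def split: if_splits)
    qed
    thus "P 1 n j * ?C k j (k+3) = 0" by simp
  qed
  have u3: "\<forall>j\<in>?I. j \<noteq> k+1 \<longrightarrow> P 1 k j * ?C n j (k+3) = 0"
  proof (intro ballI impI)
    fix j assume jI: "j \<in> ?I" "j \<noteq> k+1"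
    have "?C n j (k+3) = 0"
    proof (rule ccontr)
      assume "?C n j (k+3) \<noteq> 0"
      from W[OF this] show False using jI n k by (auto simp: al2_def be2_def idxR_def split: if_splits)
    qed
    thus "P 1 k j * ?C n j (k+3) = 0" by simp
  qed
  have u4: "\<forall>j\<in>?I. j \<noteq> k+1 \<longrightarrow> ?C 1 k j * P j n (k+3) = 0"
  proof (intro ballI impI)
    fix j assume jI: "j \<in> ?I" "j \<noteq> k+1"
    have "?C 1 k j = 0"
    proof (rule ccontr)
      assume "?C 1 k j \<noteq> 0"
      from W[OF this] show False using jI n k by (auto simp: al2_def be2_def idxR_def split: if_splits)
    qed
    thus "?C 1 k j * P j n (k+3) = 0" by simp
  qed
  have u5: "\<forall>j\<in>?I. ?C 1 n j * P j k (k+3) = 0"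
  proof (intro ballI)
    fix j assume jI: "j \<in> ?I"
    have "?C 1 n j = 0"
    proof (rule ccontr)
      assume "?C 1 n j \<noteq> 0"
      from W[OF this] show False using jI n k by (auto simp: al2_def be2_def idxR_def split: if_splits)
    qed
    thus "?C 1 n j * P j k (k+3) = 0" by simp
  qed
  have u6: "\<forall>j\<in>?I. j \<noteq> k+2 \<longrightarrow> ?C k n j * P j 1 (k+3) = 0"
  proof (intro ballI impI)
    fix j assume jI: "j \<in> ?I" "j \<noteq> k+2"
    have "?C k n j = 0"
    proof (rule ccontr)
      assume "?C k n j \<noteq> 0"
      from W[OF this] show False using jI n k by (auto simp: al2_def be2_def idxR_def split: if_splits)
    qed
    thus "?C k n j * P j 1 (k+3) = 0" by simp
  qed
  have v1: "?C 1 (k+2) (k+3) = 1" using C2_1j[OF n, of "k+2"] k n by (simp add: numeral_3_eq_3)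
  have v3: "?C n (k+1) (k+3) = -1" using C2_kn[OF n, of "k+1"] C_anti[of "tab2 n" n "k+1" "k+3"] k n by (simp add: numeral_3_eq_3)
  have v4: "?C 1 k (k+1) = 1" using C2_1j[OF n, of k] k n by simp
  have v6: "?C k n (k+2) = 1" using C2_kn[OF n, of k] k n by simp
  have s1: "(\<Sum>j\<in>?I. P k n j * ?C 1 j (k+3)) = P k n (k+2)"
    using sum_single[OF fin_idx mem[of "k+2"] u1] v1 n k by simp
  have s2: "(\<Sum>j\<in>?I. P 1 n j * ?C k j (k+3)) = 0" by (rule sum.neutral[OF u2])
  have s3: "(\<Sum>j\<in>?I. P 1 k j * ?C n j (k+3)) = - P 1 k (k+1)"
    using sum_single[OF fin_idx mem[of "k+1"] u3] v3 n k by simp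
  have s4: "(\<Sum>j\<in>?I. ?C 1 k j * P j n (k+3)) = P (k+1) n (k+3)"
    using sum_single[OF fin_idx mem[of "k+1"] u4] v4 n k by simp
  have s5: "(\<Sum>j\<in>?I. ?C 1 n j * P j k (k+3)) = 0" by (rule sum.neutral[OF u5])
  have s6: "(\<Sum>j\<in>?I. ?C k n j * P j 1 (k+3)) = - P 1 (k+2) (k+3)"
    using sum_single[OF fin_idx mem[of "k+2"] u6] v6 n k Pa[rule_format, of "k+2" 1 "k+3"] by simp
  show ?thesis unfolding CEq_def s1 s2 s3 s4 s5 s6 by simp
qed


lemma self_neg: "(x::complex) = - x \<Longrightarrow> x = 0"
  by (metis add.inverse_unique add_cancel_right_right eq_neg_iff_add_eq_0 mult_2 mult_eq_0_iff zero_neq_numeral)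

theorem coef2:
  fixes P :: "nat \<Rightarrow> nat \<Rightarrow> nat \<Rightarrow> complex"
  assumes n: "n > 5" and Pa: "\<forall>i j m. P i j m = - P j i m"
    and PCE: "\<forall>a b c m. a\<in>idxR n \<longrightarrow> b\<in>idxR n \<longrightarrow> c\<in>idxR n \<longrightarrow> m\<in>idxR n \<longrightarrow> CEq (idxR n) (antisym_tab (tab2 n)) P a b c m = 0"
  shows "\<exists>F. \<forall>i j m. i\<in>idxR n \<longrightarrow> j\<in>idxR n \<longrightarrow> m\<in>idxR n \<longrightarrow> P i j m = Qf (idxR n) (antisym_tab (tab2 n)) F i j m"
proof -
  let ?I = "idxR n" and ?C = "antisym_tab (tab2 n)"
  have mem: "\<And>t. 1 \<le> t \<Longrightarrow> t \<le> n + 2 \<Longrightarrow> t \<in> ?I" by (simp add: idxR_def)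
  have c1: "1 \<in> ?I" "2 \<in> ?I" "4 \<in> ?I" "n \<in> ?I" using n by (auto simp: idxR_def)
  have wv: "al2 n 1 = 1" "be2 n 1 = 0" "al2 n (Suc 0) = 1" "be2 n (Suc 0) = 0" "al2 n 2 = 0" "be2 n 2 = 1" "al2 n n = 2" "be2 n n = 0"
    using n by (auto simp: al2_def be2_def)
  have tx: "n+1 \<in> ?I" and ty: "n+2 \<in> ?I" by (auto simp: idxR_def)
  have Cw: "\<forall>i k m. i\<in>?I \<longrightarrow> k\<in>?I \<longrightarrow> m\<in>?I \<longrightarrow> ?C i k m \<noteq> 0 \<longrightarrow> al2 n i + al2 n k = al2 n m \<and> be2 n i + be2 n k = be2 n m"
    using C2_w[OF n] by blast
  have Cx: "\<forall>k m. k\<in>?I \<longrightarrow> m\<in>?I \<longrightarrow> ?C (n+1) k m = (if k = m then - of_int (al2 n k) else 0)"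
    using C2_x[OF n] by blast
  have Cy: "\<forall>k m. k\<in>?I \<longrightarrow> m\<in>?I \<longrightarrow> ?C (n+2) k m = (if k = m then - of_int (be2 n k) else 0)"
    using C2_y[OF n] by blast
  define Xv where "Xv a = P (n+1) a a" for a
  define Yv where "Yv a = P (n+2) a a" for a
  define A where "A k = P 1 k (k+1)" for k
  have KX: "Qf ?I ?C (F0form (n+1) (n+2) (\<lambda>a. P (n+1) a a) (P (n+1) (n+1) (n+2)) (P (n+1) (n+2) (n+1))) i j m = 0"
    if i: "i \<in> ?I" and j: "j \<in> ?I" and m: "m \<in> ?I" and wa: "al2 n i + al2 n j = al2 n m" and wb: "be2 n i + be2 n j = be2 n m" for i j m
  proof -
    have "of_int (al2 n i + al2 n j - al2 n m) * P i j m = Qf ?I ?C (\<lambda>a k. P (n+1) a k) i j m"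
      by (rule key_t[OF fin_idx tx Cx Pa PCE[rule_format, OF tx i j m] i j m])
    hence "Qf ?I ?C (P (n+1)) i j m = 0" using wa by simp
    thus ?thesis using G_reduce2[OF n i j m wa wb, of "P (n+1)"] by simp
  qed
  have KY: "Qf ?I ?C (F0form (n+1) (n+2) (\<lambda>a. P (n+2) a a) (P (n+2) (n+1) (n+2)) (P (n+2) (n+2) (n+1))) i j m = 0"
    if i: "i \<in> ?I" and j: "j \<in> ?I" and m: "m \<in> ?I" and wa: "al2 n i + al2 n j = al2 n m" and wb: "be2 n i + be2 n j = be2 n m" for i j m
  proof -
    have "of_int (be2 n i + be2 n j - be2 n m) * P i j m = Qf ?I ?C (\<lambda>a k. P (n+2) a k) i j m"
      by (rule key_t[OF fin_idx ty Cy Pa PCE[rule_format, OF ty i j m] i j m])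
    hence "Qf ?I ?C (P (n+2)) i j m = 0" using wb by simp
    thus ?thesis using G_reduce2[OF n i j m wa wb, of "P (n+2)"] by simp
  qed
  have w1k: "al2 n 1 + al2 n k = al2 n (k+1) \<and> be2 n 1 + be2 n k = be2 n (k+1)" if "2 \<le> k" "k \<le> n-2" for k
    using that n by (auto simp: al2_def be2_def)
  have wkn: "al2 n k + al2 n n = al2 n (k+2) \<and> be2 n k + be2 n n = be2 n (k+2)" if "2 \<le> k" "k \<le> n-3" for k
    using that n by (auto simp: al2_def be2_def)
  have wta: "al2 n t + al2 n a = al2 n a \<and> be2 n t + be2 n a = be2 n a" if "t \<in> {n+1,n+2}" for t a
    using that al2_x[OF n] by auto
  have X1: "Xv 1 + Xv k - Xv (k+1) = 0" if k: "2 \<le> k" "k \<le> n-2" for k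
  proof -
    have "k \<in> ?I" "k+1 \<in> ?I" using k n by (auto simp: idxR_def)
    thus ?thesis
    using KX[OF c1(1) _ _ conjunct1[OF w1k[OF k]] conjunct2[OF w1k[OF k]]] Q2_1k[OF n k] k n
    by (simp add: Xv_def)
  qed
  have Y1: "Yv 1 + Yv k - Yv (k+1) = 0" if k: "2 \<le> k" "k \<le> n-2" for k
  proof -
    have "k \<in> ?I" "k+1 \<in> ?I" using k n by (auto simp: idxR_def)
    thus ?thesis
    using KY[OF c1(1) _ _ conjunct1[OF w1k[OF k]] conjunct2[OF w1k[OF k]]] Q2_1k[OF n k] k n
    by (simp add: Yv_def)
  qed
  have k2: "2 \<le> (2::nat)" "2 \<le> n - 3" using n by auto
  have X2: "Xv 2 + Xv n - Xv 4 = 0"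
    using KX[OF c1(2) c1(4) _ conjunct1[OF wkn[OF k2]] conjunct2[OF wkn[OF k2]]] Q2_kn[OF n k2] n c1(3)
    by (simp add: Xv_def)
  have Y2: "Yv 2 + Yv n - Yv 4 = 0"
    using KY[OF c1(2) c1(4) _ conjunct1[OF wkn[OF k2]] conjunct2[OF wkn[OF k2]]] Q2_kn[OF n k2] n c1(3)
    by (simp add: Yv_def)
  have Xmid: "\<forall>a. 2 \<le> a \<longrightarrow> a \<le> n - 1 \<longrightarrow> Xv a = of_int (int a - 2) * Xv 1 + Xv 2"
  proof (intro allI)
    fix a show "2 \<le> a \<longrightarrow> a \<le> n - 1 \<longrightarrow> Xv a = of_int (int a - 2) * Xv 1 + Xv 2"
    proof (induction a)
      case 0 thus ?case by simp
    next
      case (Suc a)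
      show ?case
      proof (intro impI)
        assume a: "2 \<le> Suc a" "Suc a \<le> n - 1"
        show "Xv (Suc a) = of_int (int (Suc a) - 2) * Xv 1 + Xv 2"
        proof (cases "a = 1")
          case True thus ?thesis by (simp add: numeral_2_eq_2)
        next
          case False
          hence a2: "2 \<le> a" "a \<le> n - 2" using a by auto
          have "Xv (a+1) = Xv 1 + Xv a" using X1[OF a2] by (simp add: algebra_simps)
          also have "Xv a = of_int (int a - 2) * Xv 1 + Xv 2" using Suc.IH a2 by simp
          finally show ?thesis by (simp add: algebra_simps)
        qed
      qed
    qed
  qed
  have Ymid: "\<forall>a. 2 \<le> a \<longrightarrow> a \<le> n - 1 \<longrightarrow> Yv a = of_int (int a - 2) * Yv 1 + Yv 2"
  proof (intro allI)
    fix a show "2 \<le> a \<longrightarrow> a \<le> n - 1 \<longrightarrow> Yv a = of_int (int a - 2) * Yv 1 + Yv 2"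
    proof (induction a)
      case 0 thus ?case by simp
    next
      case (Suc a)
      show ?case
      proof (intro impI)
        assume a: "2 \<le> Suc a" "Suc a \<le> n - 1"
        show "Yv (Suc a) = of_int (int (Suc a) - 2) * Yv 1 + Yv 2"
        proof (cases "a = 1")
          case True thus ?thesis by (simp add: numeral_2_eq_2)
        next
          case False
          hence a2: "2 \<le> a" "a \<le> n - 2" using a by auto
          have "Yv (a+1) = Yv 1 + Yv a" using Y1[OF a2] by (simp add: algebra_simps)
          also have "Yv a = of_int (int a - 2) * Yv 1 + Yv 2" using Suc.IH a2 by simp
          finally show ?thesis by (simp add: algebra_simps)
        qed
      qed
    qed
  qed
  have Xform: "Xv a = of_int (al2 n a) * Xv 1 + of_int (be2 n a) * Xv 2" if ha: "1 \<le> a" "a \<le> n" for a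
  proof -
    consider "a = 1" | "2 \<le> a \<and> a \<le> n - 1" | "a = n" using ha by (cases "a = 1"; cases "a = n"; auto)
    thus ?thesis
    proof cases
      case 1 thus ?thesis by (simp add: al2_def be2_def)
    next
      case 2 thus ?thesis using Xmid[rule_format, of a] by (simp add: al2_def be2_def)
    next
      case 3
      have "Xv 4 = 2 * Xv 1 + Xv 2" using Xmid[rule_format, of 4] n by simp
      hence "Xv n = 2 * Xv 1" using X2 by (simp add: algebra_simps)
      moreover have "al2 n n = 2" "be2 n n = 0" using n by (auto simp: al2_def be2_def)
      ultimately show ?thesis using 3 by simp
    qed
  qed
  have Yform: "Yv a = of_int (al2 n a) * Yv 1 + of_int (be2 n a) * Yv 2" if ha: "1 \<le> a" "a \<le> n" for a
  proof -
    consider "a = 1" | "2 \<le> a \<and> a \<le> n - 1" | "a = n" using ha by (cases "a = 1"; cases "a = n"; auto)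
    thus ?thesis
    proof cases
      case 1 thus ?thesis by (simp add: al2_def be2_def)
    next
      case 2 thus ?thesis using Ymid[rule_format, of a] by (simp add: al2_def be2_def)
    next
      case 3
      have "Yv 4 = 2 * Yv 1 + Yv 2" using Ymid[rule_format, of 4] n by simp
      hence "Yv n = 2 * Yv 1" using Y2 by (simp add: algebra_simps)
      moreover have "al2 n n = 2" "be2 n n = 0" using n by (auto simp: al2_def be2_def)
      ultimately show ?thesis using 3 by simp
    qed
  qed
  have pq: "P (n+1) (n+2) (n+1) = 0" "P (n+1) (n+2) (n+2) = 0"
  proof -
    have a1: "1 \<le> (1::nat)" "1 \<le> n" and a2: "1 \<le> (2::nat)" "2 \<le> n" using n by auto
    have "Qf ?I ?C (F0form (n+1) (n+2) (\<lambda>a. P (n+1) a a) (P (n+1) (n+1) (n+2)) (P (n+1) (n+2) (n+1))) (n+2) 1 1 = 0"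
      using KX[OF ty c1(1) c1(1)] wta[of "n+2" 1] n by simp
    thus "P (n+1) (n+2) (n+1) = 0" using Q2_ya[OF n a1] by (simp add: wv)
    have "Qf ?I ?C (F0form (n+1) (n+2) (\<lambda>a. P (n+1) a a) (P (n+1) (n+1) (n+2)) (P (n+1) (n+2) (n+1))) (n+2) 2 2 = 0"
      using KX[OF ty c1(2) c1(2)] wta[of "n+2" 2] n by simp
    thus "P (n+1) (n+2) (n+2) = 0" using Q2_ya[OF n a2] n by (simp add: wv)
  qed
  define Dd where "Dd a = (if a \<le> n - 1 then - (\<Sum>j\<in>{2..<a}. A j) else if a = n then P 2 n 4 - (\<Sum>j\<in>{2..<4}. A j)
      else if a = n+1 then - Xv 1 else - Yv 2)" for a
  define F0 where "F0 = F0form (n+1) (n+2) Dd (- Xv 2) (- Yv 1)"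
  have Dd12: "Dd 1 = 0" "Dd 2 = 0" using n by (auto simp: Dd_def)
  have Dstep: "Dd k - Dd (k+1) = A k" if k: "2 \<le> k" "k \<le> n-2" for k
  proof -
    have le: "k + 1 \<le> n - 1" using k n by simp
    have "Dd (k+1) = - (\<Sum>j\<in>{2..<k+1}. A j)" by (subst Dd_def) (simp only: if_P[OF le])
    also have "\<dots> = - (\<Sum>j\<in>{2..<Suc k}. A j)" by simp
    also have "\<dots> = - ((\<Sum>j\<in>{2..<k}. A j) + A k)" using k by (simp add: sum.atLeastLessThan_Suc)
    finally have "Dd (k+1) = - ((\<Sum>j\<in>{2..<k}. A j) + A k)" .
    moreover have le2: "k \<le> n - 1" using k n by simp
    moreover have "Dd k = - (\<Sum>j\<in>{2..<k}. A j)" by (subst Dd_def) (simp only: if_P[OF le2])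
    ultimately show ?thesis by simp
  qed
  have Dn: "Dd n = P 2 n 4 + Dd 4"
  proof -
    have h: "4 \<le> n - 1" "\<not> n \<le> n - 1" using n by auto
    show ?thesis using h by (simp add: Dd_def)
  qed
  have Dx: "Dd (n+1) = - Xv 1" "Dd (n+2) = - Yv 2" using n by (auto simp: Dd_def)
  have Brel: "P k n (k+2) - A k - P (k+1) n (k+3) + A (k+2) = 0" if k: "2 \<le> k" "k \<le> n-4" for k
  proof -
    have "k \<in> ?I" "k+3 \<in> ?I" using k n by (auto simp: idxR_def)
    hence "CEq ?I ?C P 1 k n (k+3) = 0" using PCE c1 by blast
    thus ?thesis using CE2[OF n k Pa] by (simp add: A_def numeral_3_eq_3)
  qed
  have Bform: "\<forall>k. 2 \<le> k \<longrightarrow> k \<le> n-3 \<longrightarrow> P k n (k+2) = Dd k + Dd n - Dd (k+2)"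
  proof (intro allI)
    fix k show "2 \<le> k \<longrightarrow> k \<le> n-3 \<longrightarrow> P k n (k+2) = Dd k + Dd n - Dd (k+2)"
    proof (induction k)
      case 0 thus ?case by simp
    next
      case (Suc k)
      show ?case
      proof (intro impI)
        assume a: "2 \<le> Suc k" "Suc k \<le> n - 3"
        show "P (Suc k) n (Suc k + 2) = Dd (Suc k) + Dd n - Dd (Suc k + 2)"
        proof (cases "k = 1")
          case True thus ?thesis using Dn Dd12 by (simp add: numeral_2_eq_2 numeral_eq_Suc)
        next
          case False
          hence k: "2 \<le> k" "k \<le> n - 4" "k \<le> n - 3" using a by auto
          have ih: "P k n (k+2) = Dd k + Dd n - Dd (k+2)" using Suc.IH k by simp
          have s1: "Dd k - Dd (k+1) = A k" using Dstep[of k] k by simp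
          have s2: "Dd (k+2) - Dd (k+3) = A (k+2)" using Dstep[of "k+2"] k by (simp add: numeral_3_eq_3)
          have "P (k+1) n (k+3) = Dd (k+1) + Dd n - Dd (k+3)"
          proof -
            have "P (k+1) n (k+3) = P k n (k+2) - A k + A (k+2)" using Brel[OF k(1,2)] by (simp add: algebra_simps)
            also have "\<dots> = (Dd k + Dd n - Dd (k+2)) - (Dd k - Dd (k+1)) + (Dd (k+2) - Dd (k+3))"
              by (simp only: ih s1[symmetric] s2[symmetric])
            also have "\<dots> = Dd (k+1) + Dd n - Dd (k+3)" by algebra
            finally show ?thesis .
          qed
          thus ?thesis by (simp add: numeral_3_eq_3)
        qed
      qed
    qed
  qed
  have F0s: "\<forall>a k. a\<in>?I \<longrightarrow> k\<in>?I \<longrightarrow> F0 a k \<noteq> 0 \<longrightarrow> al2 n a = al2 n k \<and> be2 n a = be2 n k"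
    using al2_x[OF n] by (auto simp: F0_def F0form_def)
  have QA: "Qf ?I ?C F0 j i m = - Qf ?I ?C F0 i j m" for i j m
    by (rule Qf_anti) (intro allI, rule C_anti)
  have canon: "P i j m = Qf ?I ?C F0 i j m"
    if i: "i \<in> ?I" and j: "j \<in> ?I" and m: "m \<in> ?I" and wa: "al2 n i + al2 n j = al2 n m" and wb: "be2 n i + be2 n j = be2 n m"
      and cs: "i \<in> {n+1,n+2} \<or> (i = 1 \<and> 2 \<le> j \<and> j \<le> n-2 \<and> m = j+1) \<or> (j = n \<and> 2 \<le> i \<and> i \<le> n-3 \<and> m = i+2)" for i j m
  proof -
    from cs consider (t) "i \<in> {n+1,n+2}" | (a) "i = 1 \<and> 2 \<le> j \<and> j \<le> n-2 \<and> m = j+1" | (b) "j = n \<and> 2 \<le> i \<and> i \<le> n-3 \<and> m = i+2" by blast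
    thus ?thesis
    proof cases
      case t
      from wz2_t[OF n t j m wa wb] consider (e) "j \<le> n \<and> m = j" | (tt) "j \<in> {n+1,n+2} \<and> m \<in> {n+1,n+2}" by blast
      thus ?thesis
      proof cases
        case e
        have j1: "1 \<le> j" "j \<le> n" using j e by (auto simp: idxR_def)
        show ?thesis
        proof (cases "i = n+1")
          case True
          have "Qf ?I ?C F0 i j m = - of_int (al2 n j) * Dd (n+1) - of_int (be2 n j) * (- Xv 2)"
            unfolding F0_def using Q2_xa[OF n j1] True e by simp
          also have "\<dots> = Xv j" using Xform[OF j1] Dx by simp
          finally show ?thesis using True e by (simp add: Xv_def)
        next
          case False
          hence iy: "i = n+2" using t by auto
          have "Qf ?I ?C F0 i j m = - of_int (be2 n j) * Dd (n+2) - of_int (al2 n j) * (- Yv 1)"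
            unfolding F0_def using Q2_ya[OF n j1] iy e by simp
          also have "\<dots> = Yv j" using Yform[OF j1] Dx by (simp add: algebra_simps)
          finally show ?thesis using iy e by (simp add: Yv_def)
        qed
      next
        case tt
        have q0: "Qf ?I ?C F0 i j m = 0" using Q2_tt[OF n t] tt by blast
        have "P i j m = 0"
        proof -
          have "i = j \<or> (i = n+1 \<and> j = n+2) \<or> (i = n+2 \<and> j = n+1)" using t tt by auto
          moreover have "P i i m = 0" using Pa[rule_format, of i i m] by (rule self_neg)
          moreover have "P (n+1) (n+2) m = 0" using pq tt by auto
          moreover have "P (n+2) (n+1) m = 0" using pq tt Pa[rule_format, of "n+2" "n+1" m] by auto
          ultimately show ?thesis by auto
        qed
        thus ?thesis using q0 by simp
      qed
    next
      case a
      have jj: "2 \<le> j" "j \<le> n - 2" using a by auto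
      have "Qf ?I ?C F0 i j m = Dd 1 + Dd j - Dd (j+1)" unfolding F0_def using Q2_1k[OF n jj] a by simp
      also have "\<dots> = A j" using Dstep[OF jj] Dd12 by simp
      finally show ?thesis using a by (simp add: A_def)
    next
      case b
      have ii: "2 \<le> i" "i \<le> n - 3" using b by auto
      have "Qf ?I ?C F0 i j m = Dd i + Dd n - Dd (i+2)" unfolding F0_def using Q2_kn[OF n ii] b by simp
      also have "\<dots> = P i n (i+2)" using Bform ii by simp
      finally show ?thesis using b by simp
    qed
  qed
  have F0e: "\<forall>i j m. i\<in>?I \<longrightarrow> j\<in>?I \<longrightarrow> m\<in>?I \<longrightarrow> al2 n i + al2 n j = al2 n m \<longrightarrow> be2 n i + be2 n j = be2 n m \<longrightarrow> P i j m = Qf ?I ?C F0 i j m"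
  proof (intro allI impI)
    fix i j m assume i: "i \<in> ?I" and j: "j \<in> ?I" and m: "m \<in> ?I" and wa: "al2 n i + al2 n j = al2 n m" and wb: "be2 n i + be2 n j = be2 n m"
    have wa': "al2 n j + al2 n i = al2 n m" and wb': "be2 n j + be2 n i = be2 n m" using wa wb by auto
    have swap: "P i j m = Qf ?I ?C F0 i j m" if "P j i m = Qf ?I ?C F0 j i m"
      using that Pa[rule_format, of i j m] QA[of i j m] by simp
    show "P i j m = Qf ?I ?C F0 i j m"
    proof (cases "i = j")
      case True
      have "P i i m = 0" using Pa[rule_format, of i i m] by (rule self_neg)
      moreover have "Qf ?I ?C F0 i i m = 0" using QA[of i i m] by (rule self_neg)
      ultimately show ?thesis using True by simp
    next
      case ij: False
      show ?thesis
      proof (cases "i \<in> {n+1,n+2}")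
        case True thus ?thesis using canon[OF i j m wa wb] by blast
      next
        case ni: False
        show ?thesis
        proof (cases "j \<in> {n+1,n+2}")
          case True thus ?thesis using canon[OF j i m wa' wb'] swap by blast
        next
          case nj: False
          have ie: "1 \<le> i" "i \<le> n" using i ni by (auto simp: idxR_def)
          have je: "1 \<le> j" "j \<le> n" using j nj by (auto simp: idxR_def)
          have me: "1 \<le> m" "m \<le> n+2" using m by (auto simp: idxR_def)
          from wz2_e[OF n ie je me ij wa wb] show ?thesis
            using canon[OF i j m wa wb] canon[OF j i m wa' wb'] swap by blast
        qed
      qed
    qed
  qed
  show ?thesis
    by (rule weight_reduce[OF fin_idx tx ty Cw Cx Cy Pa PCE F0s F0e])
qed


definition al1 :: "nat \<Rightarrow> nat \<Rightarrow> int" where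
  "al1 n i = (if i = 1 then 1 else if 2 \<le> i \<and> i \<le> n - 1 then int i - 2 else if i = n then int n - 4 else 0)"
definition be1 :: "nat \<Rightarrow> nat \<Rightarrow> int" where
  "be1 n i = (if 2 \<le> i \<and> i \<le> n - 1 then 1 else if i = n then 2 else 0)"

lemma tab1_supp: "n > 5 \<Longrightarrow> tab1 n i j m \<noteq> 0 \<Longrightarrow> 1 \<le> m \<and> m \<le> n + 2"
  by (auto simp: tab1_def ev_def smul_def vzero_def split: if_splits)

lemma tab1_w: "n > 5 \<Longrightarrow> tab1 n i j m \<noteq> 0 \<Longrightarrow> al1 n i + al1 n j = al1 n m \<and> be1 n i + be1 n j = be1 n m"
  by (auto simp: tab1_def ev_def smul_def vzero_def al1_def be1_def split: if_splits)

lemma tab1_x0: "n > 5 \<Longrightarrow> tab1 n (n+1) k m = 0"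
  by (auto simp: tab1_def vzero_def)
lemma tab1_y0: "n > 5 \<Longrightarrow> tab1 n (n+2) k m = 0"
  by (auto simp: tab1_def vzero_def)
lemma tab1_kx: "n > 5 \<Longrightarrow> 1 \<le> k \<Longrightarrow> k \<le> n+2 \<Longrightarrow> tab1 n k (n+1) m = (if k = m then of_int (al1 n k) else 0)"
  by (auto simp: tab1_def vzero_def ev_def smul_def al1_def)
lemma tab1_ky: "n > 5 \<Longrightarrow> 1 \<le> k \<Longrightarrow> k \<le> n+2 \<Longrightarrow> tab1 n k (n+2) m = (if k = m then of_int (be1 n k) else 0)"
  by (auto simp: tab1_def vzero_def ev_def smul_def be1_def)
lemma tab1_1j: "n > 5 \<Longrightarrow> 2 \<le> j \<Longrightarrow> j \<le> n - 2 \<Longrightarrow> tab1 n 1 j (j+1) = 1"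
  by (auto simp: tab1_def ev_def)
lemma tab1_j1: "n > 5 \<Longrightarrow> 2 \<le> j \<Longrightarrow> j \<le> n - 2 \<Longrightarrow> tab1 n j 1 (j+1) = 0"
  by (auto simp: tab1_def ev_def vzero_def smul_def)
lemma tab1_E: "n > 5 \<Longrightarrow> 2 \<le> i \<Longrightarrow> i \<le> (n - 1) div 2 \<Longrightarrow> tab1 n i (n - i) n = (-1) ^ i"
  by (auto simp: tab1_def ev_def smul_def)
lemma tab1_E': "n > 5 \<Longrightarrow> 2 \<le> i \<Longrightarrow> i \<le> (n - 1) div 2 \<Longrightarrow> tab1 n (n - i) i n = 0"
  by (auto simp: tab1_def ev_def smul_def vzero_def)

lemma C1_def': "antisym_tab (tab1 n) i j m = tab1 n i j m - tab1 n j i m"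
  by (simp add: antisym_tab_def vsub_def)

lemma C1_x: "n > 5 \<Longrightarrow> k \<in> idxR n \<Longrightarrow> antisym_tab (tab1 n) (n+1) k m = (if k = m then - of_int (al1 n k) else 0)"
  using tab1_x0[of n k m] tab1_x0[of n m m] tab1_kx[of n k m] by (simp add: C1_def' idxR_def)
lemma C1_y: "n > 5 \<Longrightarrow> k \<in> idxR n \<Longrightarrow> antisym_tab (tab1 n) (n+2) k m = (if k = m then - of_int (be1 n k) else 0)"
  using tab1_y0[of n k m] tab1_y0[of n m m] tab1_ky[of n k m] by (simp add: C1_def' idxR_def)
lemma C1_1j: "n > 5 \<Longrightarrow> 2 \<le> j \<Longrightarrow> j \<le> n - 2 \<Longrightarrow> antisym_tab (tab1 n) 1 j (j+1) = 1"
  using tab1_1j[of n j] tab1_j1[of n j] by (simp add: C1_def')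
lemma C1_E: "n > 5 \<Longrightarrow> 2 \<le> i \<Longrightarrow> i \<le> (n - 1) div 2 \<Longrightarrow> antisym_tab (tab1 n) i (n - i) n = (-1) ^ i"
  using tab1_E[of n i] tab1_E'[of n i] by (simp add: C1_def')
lemma C1_supp: "n > 5 \<Longrightarrow> m \<notin> idxR n \<Longrightarrow> antisym_tab (tab1 n) a b m = 0"
proof -
  assume n: "n > 5" and m: "m \<notin> idxR n"
  have "tab1 n a b m = 0" using tab1_supp[OF n, of a b m] m by (auto simp: idxR_def)
  moreover have "tab1 n b a m = 0" using tab1_supp[OF n, of b a m] m by (auto simp: idxR_def)
  ultimately show ?thesis by (simp add: C1_def')
qed
lemma C1_w: "n > 5 \<Longrightarrow> antisym_tab (tab1 n) i k m \<noteq> 0 \<Longrightarrow> al1 n i + al1 n k = al1 n m \<and> be1 n i + be1 n k = be1 n m"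
proof -
  assume n: "n > 5" and h: "antisym_tab (tab1 n) i k m \<noteq> 0"
  hence "tab1 n i k m \<noteq> 0 \<or> tab1 n k i m \<noteq> 0" by (auto simp: C1_def')
  thus ?thesis using tab1_w[OF n, of i k m] tab1_w[OF n, of k i m] by (metis add.commute)
qed


lemma inj1: "n > 5 \<Longrightarrow> a \<in> idxR n \<Longrightarrow> k \<in> idxR n \<Longrightarrow> al1 n a = al1 n k \<Longrightarrow> be1 n a = be1 n k \<Longrightarrow>
   a = k \<or> (a \<in> {n+1, n+2} \<and> k \<in> {n+1, n+2})"
  by (auto simp: al1_def be1_def idxR_def split: if_splits)

lemma al1_x: "n > 5 \<Longrightarrow> al1 n (Suc n) = 0" "n > 5 \<Longrightarrow> al1 n (Suc (Suc n)) = 0" "n > 5 \<Longrightarrow> be1 n (Suc n) = 0" "n > 5 \<Longrightarrow> be1 n (Suc (Suc n)) = 0"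
  by (auto simp: al1_def be1_def)


lemma G_reduce1:
  assumes n: "n > 5" and i: "i \<in> idxR n" and j: "j \<in> idxR n" and m: "m \<in> idxR n"
    and wa: "al1 n i + al1 n j = al1 n m" and wb: "be1 n i + be1 n j = be1 n m"
  shows "Qf (idxR n) (antisym_tab (tab1 n)) G i j m =
    Qf (idxR n) (antisym_tab (tab1 n)) (F0form (n+1) (n+2) (\<lambda>a. G a a) (G (n+1) (n+2)) (G (n+2) (n+1))) i j m"
proof -
  have Cw: "\<forall>i k m. i\<in>idxR n \<longrightarrow> k\<in>idxR n \<longrightarrow> m\<in>idxR n \<longrightarrow> antisym_tab (tab1 n) i k m \<noteq> 0 \<longrightarrow>
     al1 n i + al1 n k = al1 n m \<and> be1 n i + be1 n k = be1 n m" using C1_w[OF n] by blast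
  have "Qf (idxR n) (antisym_tab (tab1 n)) G i j m = Qf (idxR n) (antisym_tab (tab1 n))
     (\<lambda>a k. if al1 n a = al1 n k \<and> be1 n a = be1 n k then G a k else 0) i j m"
    by (rule wz_reduce[OF Cw i j m wa wb])
  also have "\<dots> = Qf (idxR n) (antisym_tab (tab1 n)) (F0form (n+1) (n+2) (\<lambda>a. G a a) (G (n+1) (n+2)) (G (n+2) (n+1))) i j m"
  proof (rule Qf_cong[OF _ i j m], intro ballI)
    fix a k assume a: "a \<in> idxR n" and k: "k \<in> idxR n"
    show "(if al1 n a = al1 n k \<and> be1 n a = be1 n k then G a k else 0) = F0form (n+1) (n+2) (\<lambda>a. G a a) (G (n+1) (n+2)) (G (n+2) (n+1)) a k"
    proof (cases "al1 n a = al1 n k \<and> be1 n a = be1 n k")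
      case True
      hence "a = k \<or> (a \<in> {n+1, n+2} \<and> k \<in> {n+1, n+2})" using inj1[OF n a k] by blast
      thus ?thesis using True by (auto simp: F0form_def)
    next
      case False
      hence "a \<noteq> k" by auto
      moreover have "\<not> (a = n+1 \<and> k = n+2)" "\<not> (a = n+2 \<and> k = n+1)" using False n by (auto simp: al1_x[OF n])
      ultimately show ?thesis using False by (auto simp: F0form_def)
    qed
  qed
  finally show ?thesis .
qed

lemma C1a: "antisym_tab (tab1 n) j i m = - antisym_tab (tab1 n) i j m" by (rule C_anti)

lemma mem1: "n > 5 \<Longrightarrow> 1 \<le> k \<Longrightarrow> k \<le> n + 2 \<Longrightarrow> k \<in> idxR n" by (simp add: idxR_def)

lemma Q1_1k:
  assumes n: "n > 5" and k: "2 \<le> k" "k \<le> n - 2"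
  shows "Qf (idxR n) (antisym_tab (tab1 n)) (F0form (n+1) (n+2) D r s) 1 k (k+1) = D 1 + D k - D (k+1)"
proof -
  have "k \<noteq> n" "k \<noteq> n + 1" "k \<noteq> n+2" "k + 1 \<noteq> n+1" "k+1 \<noteq> n+2" using n k by auto
  thus ?thesis
  using Qf_F0form[where C="antisym_tab (tab1 n)" and D=D and r=r and s=s, OF fin_idx mem1[OF n, of "n+1"] mem1[OF n, of "n+2"] mem1[OF n, of 1] mem1[OF n, of k] mem1[OF n, of "k+1"] C1a]
    C1_1j[OF n k] n k by simp
qed

lemma Q1_E:
  assumes n: "n > 5" and k: "2 \<le> k" "k \<le> (n - 1) div 2"
  shows "Qf (idxR n) (antisym_tab (tab1 n)) (F0form (n+1) (n+2) D r s) k (n - k) n = (-1) ^ k * (D k + D (n - k) - D n)"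
proof -
  have jm: "n - k \<in> idxR n" "n \<in> idxR n" using n k by (auto simp: idxR_def)
  have "k \<noteq> n" "k \<noteq> n + 1" "k \<noteq> n+2" "n - k \<noteq> n+1" "n - k \<noteq> n+2" using n k by auto
  thus ?thesis
  using Qf_F0form[where C="antisym_tab (tab1 n)" and D=D and r=r and s=s, OF fin_idx mem1[OF n, of "n+1"] mem1[OF n, of "n+2"] mem1[OF n, of k] jm C1a]
    C1_E[OF n k] n k by simp
qed

lemma Q1_xa:
  assumes n: "n > 5" and a: "1 \<le> a" "a \<le> n"
  shows "Qf (idxR n) (antisym_tab (tab1 n)) (F0form (n+1) (n+2) D r s) (n+1) a a = - of_int (al1 n a) * D (n+1) - of_int (be1 n a) * r"
proof -
  have x: "antisym_tab (tab1 n) (n+1) a a = - of_int (al1 n a)" using C1_x[OF n mem1[OF n a(1)]] a by simp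
  have y: "antisym_tab (tab1 n) a (n+2) a = of_int (be1 n a)" using C1_y[OF n mem1[OF n a(1)]] a C1a[of n "n+2" a a] by simp
  show ?thesis
  using Qf_F0form[where C="antisym_tab (tab1 n)" and D=D and r=r and s=s, OF fin_idx mem1[OF n, of "n+1"] mem1[OF n, of "n+2"] mem1[OF n, of "n+1"] mem1[OF n, of a] mem1[OF n, of a] C1a]
    x y n a by (simp add: algebra_simps)
qed

lemma Q1_ya:
  assumes n: "n > 5" and a: "1 \<le> a" "a \<le> n"
  shows "Qf (idxR n) (antisym_tab (tab1 n)) (F0form (n+1) (n+2) D r s) (n+2) a a = - of_int (be1 n a) * D (n+2) - of_int (al1 n a) * s"
proof -
  have y: "antisym_tab (tab1 n) (n+2) a a = - of_int (be1 n a)" using C1_y[OF n mem1[OF n a(1)]] a by simp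
  have x: "antisym_tab (tab1 n) a (n+1) a = of_int (al1 n a)" using C1_x[OF n mem1[OF n a(1)]] a C1a[of n "n+1" a a] by simp
  show ?thesis
  using Qf_F0form[where C="antisym_tab (tab1 n)" and D=D and r=r and s=s, OF fin_idx mem1[OF n, of "n+1"] mem1[OF n, of "n+2"] mem1[OF n, of "n+2"] mem1[OF n, of a] mem1[OF n, of a] C1a]
    x y n a by (simp add: algebra_simps)
qed

lemma C1_t0:
  assumes n: "n > 5" and t: "t \<in> {n+1,n+2}" and k: "k \<in> idxR n" and m: "m \<in> {n+1,n+2}"
  shows "antisym_tab (tab1 n) t k m = 0"
proof -
  have a: "al1 n m = 0" "be1 n m = 0" using m n by (auto simp: al1_def be1_def)
  show ?thesis using t C1_x[OF n k, of m] C1_y[OF n k, of m] a by auto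
qed

lemma C1_t0':
  assumes n: "n > 5" and t: "t \<in> {n+1,n+2}" and j: "j \<in> {n+1,n+2}" and k: "k \<in> idxR n"
  shows "antisym_tab (tab1 n) t j k = 0"
proof -
  have jI: "j \<in> idxR n" using j by (auto simp: idxR_def)
  have a: "al1 n j = 0" "be1 n j = 0" using j n by (auto simp: al1_def be1_def)
  show ?thesis using t C1_x[OF n jI, of k] C1_y[OF n jI, of k] a by auto
qed

lemma Q1_tt:
  assumes n: "n > 5" and t: "i \<in> {n+1,n+2}" "j \<in> {n+1,n+2}" "m \<in> {n+1,n+2}"
  shows "Qf (idxR n) (antisym_tab (tab1 n)) G i j m = 0"
proof -
  have "\<forall>k\<in>idxR n. antisym_tab (tab1 n) i k m = 0" using C1_t0[OF n t(1) _ t(3)] by blast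
  moreover have "\<forall>k\<in>idxR n. antisym_tab (tab1 n) j k m = 0" using C1_t0[OF n t(2) _ t(3)] by blast
  moreover have "\<forall>k\<in>idxR n. antisym_tab (tab1 n) i j k = 0" using C1_t0'[OF n t(1) t(2)] by blast
  ultimately show ?thesis unfolding Qf_def by simp
qed



lemma wz1_e:
  assumes n: "n > 5" and h: "n = 2*h+1" and i: "1 \<le> i" "i \<le> n" and j: "1 \<le> j" "j \<le> n" and m: "1 \<le> m" "m \<le> n + 2"
    and ij: "i \<noteq> j" and wa: "al1 n i + al1 n j = al1 n m" and wb: "be1 n i + be1 n j = be1 n m"
  shows "(i = 1 \<and> 2 \<le> j \<and> j \<le> n-2 \<and> m = j+1) \<or> (j = 1 \<and> 2 \<le> i \<and> i \<le> n-2 \<and> m = i+1)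
    \<or> (2 \<le> i \<and> i \<le> h \<and> j = n - i \<and> m = n) \<or> (2 \<le> j \<and> j \<le> h \<and> i = n - j \<and> m = n)"
  using assms by (auto simp: al1_def be1_def split: if_splits)

lemma wz1_t:
  assumes n: "n > 5" and i: "i \<in> {n+1,n+2}" and j: "j \<in> idxR n" and m: "m \<in> idxR n"
    and wa: "al1 n i + al1 n j = al1 n m" and wb: "be1 n i + be1 n j = be1 n m"
  shows "(j \<le> n \<and> m = j) \<or> (j \<in> {n+1,n+2} \<and> m \<in> {n+1,n+2})"
proof -
  have "al1 n i = 0" "be1 n i = 0" using i al1_x[OF n] by auto
  hence "al1 n j = al1 n m" "be1 n j = be1 n m" using wa wb by auto
  from inj1[OF n j m this] show ?thesis using j by (auto simp: idxR_def)
qed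

lemma CE1:
  fixes P :: "nat \<Rightarrow> nat \<Rightarrow> nat \<Rightarrow> complex"
  assumes n: "n > 5" and h: "n = 2*h+1" and k: "2 \<le> k" "k + 1 \<le> h" and Pa: "\<forall>i j m. P i j m = - P j i m"
  shows "CEq (idxR n) (antisym_tab (tab1 n)) P 1 k (n-k-1) n =
     (-1)^k * P 1 k (k+1) - (-1)^k * P 1 (n-k-1) (n-k) - P (k+1) (n-k-1) n - P k (n-k) n"
proof -
  let ?I = "idxR n" and ?C = "antisym_tab (tab1 n)"
  have W: "\<And>a b c. ?C a b c \<noteq> 0 \<Longrightarrow> al1 n a + al1 n b = al1 n c \<and> be1 n a + be1 n b = be1 n c"
    using C1_w[OF n] by blast
  have mem: "\<And>t. 1 \<le> t \<Longrightarrow> t \<le> n + 2 \<Longrightarrow> t \<in> ?I" by (simp add: idxR_def)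
  have u1: "\<forall>j\<in>?I. P k (n-k-1) j * ?C 1 j n = 0"
  proof (intro ballI)
    fix j assume jI: "j \<in> ?I"
    have "?C 1 j n = 0"
    proof (rule ccontr)
      assume "?C 1 j n \<noteq> 0"
      from W[OF this] show False using jI n h k by (auto simp: al1_def be1_def idxR_def split: if_splits)
    qed
    thus "P k (n-k-1) j * ?C 1 j n = 0" by simp
  qed
  have u2: "\<forall>j\<in>?I. j \<noteq> n-k \<longrightarrow> P 1 (n-k-1) j * ?C k j n = 0"
  proof (intro ballI impI)
    fix j assume jI: "j \<in> ?I" "j \<noteq> n-k"
    have "?C k j n = 0"
    proof (rule ccontr)
      assume "?C k j n \<noteq> 0"
      from W[OF this] show False using jI n h k by (auto simp: al1_def be1_def idxR_def split: if_splits)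
    qed
    thus "P 1 (n-k-1) j * ?C k j n = 0" by simp
  qed
  have u3: "\<forall>j\<in>?I. j \<noteq> k+1 \<longrightarrow> P 1 k j * ?C (n-k-1) j n = 0"
  proof (intro ballI impI)
    fix j assume jI: "j \<in> ?I" "j \<noteq> k+1"
    have "?C (n-k-1) j n = 0"
    proof (rule ccontr)
      assume "?C (n-k-1) j n \<noteq> 0"
      from W[OF this] show False using jI n h k by (auto simp: al1_def be1_def idxR_def split: if_splits)
    qed
    thus "P 1 k j * ?C (n-k-1) j n = 0" by simp
  qed
  have u4: "\<forall>j\<in>?I. j \<noteq> k+1 \<longrightarrow> ?C 1 k j * P j (n-k-1) n = 0"
  proof (intro ballI impI)
    fix j assume jI: "j \<in> ?I" "j \<noteq> k+1"
    have "?C 1 k j = 0"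
    proof (rule ccontr)
      assume "?C 1 k j \<noteq> 0"
      from W[OF this] show False using jI n h k by (auto simp: al1_def be1_def idxR_def split: if_splits)
    qed
    thus "?C 1 k j * P j (n-k-1) n = 0" by simp
  qed
  have u5: "\<forall>j\<in>?I. j \<noteq> n-k \<longrightarrow> ?C 1 (n-k-1) j * P j k n = 0"
  proof (intro ballI impI)
    fix j assume jI: "j \<in> ?I" "j \<noteq> n-k"
    have "?C 1 (n-k-1) j = 0"
    proof (rule ccontr)
      assume "?C 1 (n-k-1) j \<noteq> 0"
      from W[OF this] show False using jI n h k by (auto simp: al1_def be1_def idxR_def split: if_splits)
    qed
    thus "?C 1 (n-k-1) j * P j k n = 0" by simp
  qed
  have u6: "\<forall>j\<in>?I. ?C k (n-k-1) j * P j 1 n = 0"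
  proof (intro ballI)
    fix j assume jI: "j \<in> ?I"
    have "?C k (n-k-1) j = 0"
    proof (rule ccontr)
      assume "?C k (n-k-1) j \<noteq> 0"
      from W[OF this] show False using jI n h k by (auto simp: al1_def be1_def idxR_def split: if_splits)
    qed
    thus "?C k (n-k-1) j * P j 1 n = 0" by simp
  qed
  have hd: "(n - 1) div 2 = h" using h by simp
  have v2: "?C k (n-k) n = (-1)^k" using C1_E[OF n, of k] k hd by simp
  have v3: "?C (n-k-1) (k+1) n = (-1)^k"
  proof -
    have "?C (k+1) (n-(k+1)) n = (-1)^(k+1)" using C1_E[OF n, of "k+1"] k hd by simp
    moreover have "n - (k+1) = n-k-1" by simp
    ultimately show ?thesis using C_anti[of "tab1 n" "n-k-1" "k+1" n] by simp
  qed
  have v4: "?C 1 k (k+1) = 1" using C1_1j[OF n, of k] k h by simp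
  have v5: "?C 1 (n-k-1) (n-k) = 1"
  proof -
    have "?C 1 (n-k-1) (n-k-1+1) = 1" using C1_1j[OF n, of "n-k-1"] k h by simp
    moreover have "n-k-1+1 = n-k" using k h by simp
    ultimately show ?thesis by simp
  qed
  have s1: "(\<Sum>j\<in>?I. P k (n-k-1) j * ?C 1 j n) = 0" by (rule sum.neutral[OF u1])
  have s2: "(\<Sum>j\<in>?I. P 1 (n-k-1) j * ?C k j n) = (-1)^k * P 1 (n-k-1) (n-k)"
    using sum_single[OF fin_idx mem[of "n-k"] u2] v2 n k h by simp
  have s3: "(\<Sum>j\<in>?I. P 1 k j * ?C (n-k-1) j n) = (-1)^k * P 1 k (k+1)"
    using sum_single[OF fin_idx mem[of "k+1"] u3] v3 n k h by simp
  have s4: "(\<Sum>j\<in>?I. ?C 1 k j * P j (n-k-1) n) = P (k+1) (n-k-1) n"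
    using sum_single[OF fin_idx mem[of "k+1"] u4] v4 n k h by simp
  have s5: "(\<Sum>j\<in>?I. ?C 1 (n-k-1) j * P j k n) = - P k (n-k) n"
    using sum_single[OF fin_idx mem[of "n-k"] u5] v5 n k h Pa[rule_format, of "n-k" k n] by simp
  have s6: "(\<Sum>j\<in>?I. ?C k (n-k-1) j * P j 1 n) = 0" by (rule sum.neutral[OF u6])
  show ?thesis unfolding CEq_def s1 s2 s3 s4 s5 s6 by (simp add: algebra_simps)
qed


theorem coef1:
  fixes P :: "nat \<Rightarrow> nat \<Rightarrow> nat \<Rightarrow> complex"
  assumes n: "n > 5" and h: "n = 2*h+1" and Pa: "\<forall>i j m. P i j m = - P j i m"
    and PCE: "\<forall>a b c m. a\<in>idxR n \<longrightarrow> b\<in>idxR n \<longrightarrow> c\<in>idxR n \<longrightarrow> m\<in>idxR n \<longrightarrow> CEq (idxR n) (antisym_tab (tab1 n)) P a b c m = 0"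
  shows "\<exists>F. \<forall>i j m. i\<in>idxR n \<longrightarrow> j\<in>idxR n \<longrightarrow> m\<in>idxR n \<longrightarrow> P i j m = Qf (idxR n) (antisym_tab (tab1 n)) F i j m"
proof -
  let ?I = "idxR n" and ?C = "antisym_tab (tab1 n)"
  have mem: "\<And>t. 1 \<le> t \<Longrightarrow> t \<le> n + 2 \<Longrightarrow> t \<in> ?I" by (simp add: idxR_def)
  have c1: "1 \<in> ?I" "2 \<in> ?I" "n - 2 \<in> ?I" "n \<in> ?I" using n by (auto simp: idxR_def)
  have hd: "(n - 1) div 2 = h" using h by simp
  have wv: "al1 n 1 = 1" "be1 n 1 = 0" "al1 n (Suc 0) = 1" "be1 n (Suc 0) = 0" "al1 n 2 = 0" "be1 n 2 = 1" "al1 n n = int n - 4" "be1 n n = 2"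
    using n by (auto simp: al1_def be1_def)
  have tx: "n+1 \<in> ?I" and ty: "n+2 \<in> ?I" by (auto simp: idxR_def)
  have Cw: "\<forall>i k m. i\<in>?I \<longrightarrow> k\<in>?I \<longrightarrow> m\<in>?I \<longrightarrow> ?C i k m \<noteq> 0 \<longrightarrow> al1 n i + al1 n k = al1 n m \<and> be1 n i + be1 n k = be1 n m"
    using C1_w[OF n] by blast
  have Cx: "\<forall>k m. k\<in>?I \<longrightarrow> m\<in>?I \<longrightarrow> ?C (n+1) k m = (if k = m then - of_int (al1 n k) else 0)"
    using C1_x[OF n] by blast
  have Cy: "\<forall>k m. k\<in>?I \<longrightarrow> m\<in>?I \<longrightarrow> ?C (n+2) k m = (if k = m then - of_int (be1 n k) else 0)"
    using C1_y[OF n] by blast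
  define Xv where "Xv a = P (n+1) a a" for a
  define Yv where "Yv a = P (n+2) a a" for a
  define A where "A k = P 1 k (k+1)" for k
  have KX: "Qf ?I ?C (F0form (n+1) (n+2) (\<lambda>a. P (n+1) a a) (P (n+1) (n+1) (n+2)) (P (n+1) (n+2) (n+1))) i j m = 0"
    if i: "i \<in> ?I" and j: "j \<in> ?I" and m: "m \<in> ?I" and wa: "al1 n i + al1 n j = al1 n m" and wb: "be1 n i + be1 n j = be1 n m" for i j m
  proof -
    have "of_int (al1 n i + al1 n j - al1 n m) * P i j m = Qf ?I ?C (\<lambda>a k. P (n+1) a k) i j m"
      by (rule key_t[OF fin_idx tx Cx Pa PCE[rule_format, OF tx i j m] i j m])
    hence "Qf ?I ?C (P (n+1)) i j m = 0" using wa by simp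
    thus ?thesis using G_reduce1[OF n i j m wa wb, of "P (n+1)"] by simp
  qed
  have KY: "Qf ?I ?C (F0form (n+1) (n+2) (\<lambda>a. P (n+2) a a) (P (n+2) (n+1) (n+2)) (P (n+2) (n+2) (n+1))) i j m = 0"
    if i: "i \<in> ?I" and j: "j \<in> ?I" and m: "m \<in> ?I" and wa: "al1 n i + al1 n j = al1 n m" and wb: "be1 n i + be1 n j = be1 n m" for i j m
  proof -
    have "of_int (be1 n i + be1 n j - be1 n m) * P i j m = Qf ?I ?C (\<lambda>a k. P (n+2) a k) i j m"
      by (rule key_t[OF fin_idx ty Cy Pa PCE[rule_format, OF ty i j m] i j m])
    hence "Qf ?I ?C (P (n+2)) i j m = 0" using wb by simp
    thus ?thesis using G_reduce1[OF n i j m wa wb, of "P (n+2)"] by simp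
  qed
  have w1k: "al1 n 1 + al1 n k = al1 n (k+1) \<and> be1 n 1 + be1 n k = be1 n (k+1)" if "2 \<le> k" "k \<le> n-2" for k
    using that n by (auto simp: al1_def be1_def)
  have wE: "al1 n k + al1 n (n-k) = al1 n n \<and> be1 n k + be1 n (n-k) = be1 n n" if "2 \<le> k" "k \<le> h" for k
    using that n h by (auto simp: al1_def be1_def)
  have wta: "al1 n t + al1 n a = al1 n a \<and> be1 n t + be1 n a = be1 n a" if "t \<in> {n+1,n+2}" for t a
    using that al1_x[OF n] by auto
  have X1: "Xv 1 + Xv k - Xv (k+1) = 0" if k: "2 \<le> k" "k \<le> n-2" for k
  proof -
    have "k \<in> ?I" "k+1 \<in> ?I" using k n by (auto simp: idxR_def)
    thus ?thesis
    using KX[OF c1(1) _ _ conjunct1[OF w1k[OF k]] conjunct2[OF w1k[OF k]]] Q1_1k[OF n k] k n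
    by (simp add: Xv_def)
  qed
  have Y1: "Yv 1 + Yv k - Yv (k+1) = 0" if k: "2 \<le> k" "k \<le> n-2" for k
  proof -
    have "k \<in> ?I" "k+1 \<in> ?I" using k n by (auto simp: idxR_def)
    thus ?thesis
    using KY[OF c1(1) _ _ conjunct1[OF w1k[OF k]] conjunct2[OF w1k[OF k]]] Q1_1k[OF n k] k n
    by (simp add: Yv_def)
  qed
  have k2: "2 \<le> (2::nat)" "2 \<le> h" "2 \<le> (n - 1) div 2" using n h by auto
  have X2: "Xv 2 + Xv (n-2) - Xv n = 0"
    using KX[OF c1(2) c1(3) c1(4) conjunct1[OF wE[OF k2(1,2)]] conjunct2[OF wE[OF k2(1,2)]]] Q1_E[OF n k2(1,3)] n
    by (simp add: Xv_def)
  have Y2: "Yv 2 + Yv (n-2) - Yv n = 0"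
    using KY[OF c1(2) c1(3) c1(4) conjunct1[OF wE[OF k2(1,2)]] conjunct2[OF wE[OF k2(1,2)]]] Q1_E[OF n k2(1,3)] n
    by (simp add: Yv_def)
  have Xmid: "\<forall>a. 2 \<le> a \<longrightarrow> a \<le> n - 1 \<longrightarrow> Xv a = of_int (int a - 2) * Xv 1 + Xv 2"
  proof (intro allI)
    fix a show "2 \<le> a \<longrightarrow> a \<le> n - 1 \<longrightarrow> Xv a = of_int (int a - 2) * Xv 1 + Xv 2"
    proof (induction a)
      case 0 thus ?case by simp
    next
      case (Suc a)
      show ?case
      proof (intro impI)
        assume a: "2 \<le> Suc a" "Suc a \<le> n - 1"
        show "Xv (Suc a) = of_int (int (Suc a) - 2) * Xv 1 + Xv 2"
        proof (cases "a = 1")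
          case True thus ?thesis by (simp add: numeral_2_eq_2)
        next
          case False
          hence a2: "2 \<le> a" "a \<le> n - 2" using a by auto
          have "Xv (a+1) = Xv 1 + Xv a" using X1[OF a2] by (simp add: algebra_simps)
          also have "Xv a = of_int (int a - 2) * Xv 1 + Xv 2" using Suc.IH a2 by simp
          finally show ?thesis by (simp add: algebra_simps)
        qed
      qed
    qed
  qed
  have Ymid: "\<forall>a. 2 \<le> a \<longrightarrow> a \<le> n - 1 \<longrightarrow> Yv a = of_int (int a - 2) * Yv 1 + Yv 2"
  proof (intro allI)
    fix a show "2 \<le> a \<longrightarrow> a \<le> n - 1 \<longrightarrow> Yv a = of_int (int a - 2) * Yv 1 + Yv 2"
    proof (induction a)
      case 0 thus ?case by simp
    next
      case (Suc a)
      show ?case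
      proof (intro impI)
        assume a: "2 \<le> Suc a" "Suc a \<le> n - 1"
        show "Yv (Suc a) = of_int (int (Suc a) - 2) * Yv 1 + Yv 2"
        proof (cases "a = 1")
          case True thus ?thesis by (simp add: numeral_2_eq_2)
        next
          case False
          hence a2: "2 \<le> a" "a \<le> n - 2" using a by auto
          have "Yv (a+1) = Yv 1 + Yv a" using Y1[OF a2] by (simp add: algebra_simps)
          also have "Yv a = of_int (int a - 2) * Yv 1 + Yv 2" using Suc.IH a2 by simp
          finally show ?thesis by (simp add: algebra_simps)
        qed
      qed
    qed
  qed
  have Xform: "Xv a = of_int (al1 n a) * Xv 1 + of_int (be1 n a) * Xv 2" if ha: "1 \<le> a" "a \<le> n" for a
  proof -
    consider "a = 1" | "2 \<le> a \<and> a \<le> n - 1" | "a = n" using ha by (cases "a = 1"; cases "a = n"; auto)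
    thus ?thesis
    proof cases
      case 1 thus ?thesis by (simp add: wv)
    next
      case 2 thus ?thesis using Xmid[rule_format, of a] by (simp add: al1_def be1_def)
    next
      case 3
      have "Xv (n-2) = of_int (int (n-2) - 2) * Xv 1 + Xv 2" using Xmid[rule_format, of "n-2"] n by simp
      hence "Xv n = of_int (int n - 4) * Xv 1 + 2 * Xv 2" using X2 n by (simp add: algebra_simps of_nat_diff) algebra
      moreover have "al1 n n = int n - 4" "be1 n n = 2" using n by (auto simp: al1_def be1_def)
      ultimately show ?thesis using 3 by simp
    qed
  qed
  have Yform: "Yv a = of_int (al1 n a) * Yv 1 + of_int (be1 n a) * Yv 2" if ha: "1 \<le> a" "a \<le> n" for a
  proof -
    consider "a = 1" | "2 \<le> a \<and> a \<le> n - 1" | "a = n" using ha by (cases "a = 1"; cases "a = n"; auto)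
    thus ?thesis
    proof cases
      case 1 thus ?thesis by (simp add: wv)
    next
      case 2 thus ?thesis using Ymid[rule_format, of a] by (simp add: al1_def be1_def)
    next
      case 3
      have "Yv (n-2) = of_int (int (n-2) - 2) * Yv 1 + Yv 2" using Ymid[rule_format, of "n-2"] n by simp
      hence "Yv n = of_int (int n - 4) * Yv 1 + 2 * Yv 2" using Y2 n by (simp add: algebra_simps of_nat_diff) algebra
      moreover have "al1 n n = int n - 4" "be1 n n = 2" using n by (auto simp: al1_def be1_def)
      ultimately show ?thesis using 3 by simp
    qed
  qed
  have pq: "P (n+1) (n+2) (n+1) = 0" "P (n+1) (n+2) (n+2) = 0"
  proof -
    have a1: "1 \<le> (1::nat)" "1 \<le> n" and a2: "1 \<le> (2::nat)" "2 \<le> n" using n by auto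
    have "Qf ?I ?C (F0form (n+1) (n+2) (\<lambda>a. P (n+1) a a) (P (n+1) (n+1) (n+2)) (P (n+1) (n+2) (n+1))) (n+2) 1 1 = 0"
      using KX[OF ty c1(1) c1(1)] wta[of "n+2" 1] n by simp
    thus "P (n+1) (n+2) (n+1) = 0" using Q1_ya[OF n a1] by (simp add: wv)
    have "Qf ?I ?C (F0form (n+1) (n+2) (\<lambda>a. P (n+1) a a) (P (n+1) (n+1) (n+2)) (P (n+1) (n+2) (n+1))) (n+2) 2 2 = 0"
      using KX[OF ty c1(2) c1(2)] wta[of "n+2" 2] n by simp
    thus "P (n+1) (n+2) (n+2) = 0" using Q1_ya[OF n a2] n by (simp add: wv)
  qed
  define Dd where "Dd a = (if a \<le> n - 1 then - (\<Sum>j\<in>{2..<a}. A j) else if a = n then - (\<Sum>j\<in>{2..<n-2}. A j) - P 2 (n-2) n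
      else if a = n+1 then - Xv 1 else - Yv 2)" for a
  define F0 where "F0 = F0form (n+1) (n+2) Dd (- Xv 2) (- Yv 1)"
  have Dd12: "Dd 1 = 0" "Dd 2 = 0" using n by (auto simp: Dd_def)
  have Dstep: "Dd k - Dd (k+1) = A k" if k: "2 \<le> k" "k \<le> n-2" for k
  proof -
    have le: "k + 1 \<le> n - 1" using k n by simp
    have "Dd (k+1) = - (\<Sum>j\<in>{2..<k+1}. A j)" by (subst Dd_def) (simp only: if_P[OF le])
    also have "\<dots> = - (\<Sum>j\<in>{2..<Suc k}. A j)" by simp
    also have "\<dots> = - ((\<Sum>j\<in>{2..<k}. A j) + A k)" using k by (simp add: sum.atLeastLessThan_Suc)
    finally have "Dd (k+1) = - ((\<Sum>j\<in>{2..<k}. A j) + A k)" .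
    moreover have le2: "k \<le> n - 1" using k n by simp
    moreover have "Dd k = - (\<Sum>j\<in>{2..<k}. A j)" by (subst Dd_def) (simp only: if_P[OF le2])
    ultimately show ?thesis by simp
  qed
  have Dn: "Dd n = Dd (n-2) - P 2 (n-2) n"
  proof -
    have h1: "n - 2 \<le> n - 1" "\<not> n \<le> n - 1" using n by auto
    show ?thesis using h1 by (simp add: Dd_def)
  qed
  have Dx: "Dd (n+1) = - Xv 1" "Dd (n+2) = - Yv 2" using n by (auto simp: Dd_def)
  define E where "E i = P i (n-i) n" for i
  have Erel: "E (k+1) = (-1)^k * (A k - A (n-k-1)) - E k" if k: "2 \<le> k" "k + 1 \<le> h" for k
  proof -
    have "k \<in> ?I" "n-k-1 \<in> ?I" using k n h by (auto simp: idxR_def)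
    hence "CEq ?I ?C P 1 k (n-k-1) n = 0" using PCE c1 by blast
    hence "(-1)^k * P 1 k (k+1) - (-1)^k * P 1 (n-k-1) (n-k) - P (k+1) (n-k-1) n - P k (n-k) n = 0"
      using CE1[OF n h k Pa] by simp
    moreover have "n - (k+1) = n-k-1" by simp
    moreover have "n-k-1+1 = n-k" using k h by simp
    ultimately have "(-1)^k * A k - (-1)^k * A (n-k-1) - E (k+1) - E k = 0" by (simp add: A_def E_def)
    thus ?thesis by (simp add: algebra_simps)
  qed
  have Eform: "\<forall>k. 2 \<le> k \<longrightarrow> k \<le> h \<longrightarrow> E k = (-1)^k * (Dd k + Dd (n-k) - Dd n)"
  proof (intro allI)
    fix k show "2 \<le> k \<longrightarrow> k \<le> h \<longrightarrow> E k = (-1)^k * (Dd k + Dd (n-k) - Dd n)"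
    proof (induction k)
      case 0 thus ?case by simp
    next
      case (Suc k)
      show ?case
      proof (intro impI)
        assume a: "2 \<le> Suc k" "Suc k \<le> h"
        show "E (Suc k) = (-1)^(Suc k) * (Dd (Suc k) + Dd (n - Suc k) - Dd n)"
        proof (cases "k = 1")
          case True thus ?thesis using Dn Dd12 by (simp add: numeral_2_eq_2 E_def)
        next
          case False
          hence k: "2 \<le> k" "k + 1 \<le> h" "k \<le> h" using a by auto
          have ih: "E k = (-1)^k * (Dd k + Dd (n-k) - Dd n)" using Suc.IH k by simp
          have s1: "A k = Dd k - Dd (k+1)" using Dstep[of k] k h by simp
          have s2: "A (n-k-1) = Dd (n-k-1) - Dd (n-k)"
          proof -
            have "Dd (n-k-1) - Dd (n-k-1+1) = A (n-k-1)" using Dstep[of "n-k-1"] k h by simp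
            moreover have "n-k-1+1 = n-k" using k h by simp
            ultimately show ?thesis by simp
          qed
          have e: "n - Suc k = n-k-1" by simp
          have "E (k+1) = (-1)^k * (A k - A (n-k-1)) - E k" by (rule Erel[OF k(1,2)])
          also have "\<dots> = (-1)^k * ((Dd k - Dd (k+1)) - (Dd (n-k-1) - Dd (n-k))) - (-1)^k * (Dd k + Dd (n-k) - Dd n)"
            by (simp only: ih s1 s2)
          also have "\<dots> = - ((-1)^k) * (Dd (k+1) + Dd (n-k-1) - Dd n)" by algebra
          finally show ?thesis by simp
        qed
      qed
    qed
  qed
  have F0s: "\<forall>a k. a\<in>?I \<longrightarrow> k\<in>?I \<longrightarrow> F0 a k \<noteq> 0 \<longrightarrow> al1 n a = al1 n k \<and> be1 n a = be1 n k"
    using al1_x[OF n] by (auto simp: F0_def F0form_def)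
  have QA: "Qf ?I ?C F0 j i m = - Qf ?I ?C F0 i j m" for i j m
    by (rule Qf_anti) (intro allI, rule C_anti)
  have canon: "P i j m = Qf ?I ?C F0 i j m"
    if i: "i \<in> ?I" and j: "j \<in> ?I" and m: "m \<in> ?I" and wa: "al1 n i + al1 n j = al1 n m" and wb: "be1 n i + be1 n j = be1 n m"
      and cs: "i \<in> {n+1,n+2} \<or> (i = 1 \<and> 2 \<le> j \<and> j \<le> n-2 \<and> m = j+1) \<or> (2 \<le> i \<and> i \<le> h \<and> j = n - i \<and> m = n)" for i j m
  proof -
    from cs consider (t) "i \<in> {n+1,n+2}" | (a) "i = 1 \<and> 2 \<le> j \<and> j \<le> n-2 \<and> m = j+1" | (b) "2 \<le> i \<and> i \<le> h \<and> j = n - i \<and> m = n" by blast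
    thus ?thesis
    proof cases
      case t
      from wz1_t[OF n t j m wa wb] consider (e) "j \<le> n \<and> m = j" | (tt) "j \<in> {n+1,n+2} \<and> m \<in> {n+1,n+2}" by blast
      thus ?thesis
      proof cases
        case e
        have j1: "1 \<le> j" "j \<le> n" using j e by (auto simp: idxR_def)
        show ?thesis
        proof (cases "i = n+1")
          case True
          have "Qf ?I ?C F0 i j m = - of_int (al1 n j) * Dd (n+1) - of_int (be1 n j) * (- Xv 2)"
            unfolding F0_def using Q1_xa[OF n j1] True e by simp
          also have "\<dots> = Xv j" using Xform[OF j1] Dx by simp
          finally show ?thesis using True e by (simp add: Xv_def)
        next
          case False
          hence iy: "i = n+2" using t by auto
          have "Qf ?I ?C F0 i j m = - of_int (be1 n j) * Dd (n+2) - of_int (al1 n j) * (- Yv 1)"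
            unfolding F0_def using Q1_ya[OF n j1] iy e by simp
          also have "\<dots> = Yv j" using Yform[OF j1] Dx by (simp add: algebra_simps)
          finally show ?thesis using iy e by (simp add: Yv_def)
        qed
      next
        case tt
        have q0: "Qf ?I ?C F0 i j m = 0" using Q1_tt[OF n t] tt by blast
        have "P i j m = 0"
        proof -
          have "i = j \<or> (i = n+1 \<and> j = n+2) \<or> (i = n+2 \<and> j = n+1)" using t tt by auto
          moreover have "P i i m = 0" using Pa[rule_format, of i i m] by (rule self_neg)
          moreover have "P (n+1) (n+2) m = 0" using pq tt by auto
          moreover have "P (n+2) (n+1) m = 0" using pq tt Pa[rule_format, of "n+2" "n+1" m] by auto
          ultimately show ?thesis by auto
        qed
        thus ?thesis using q0 by simp
      qed
    next
      case a
      have jj: "2 \<le> j" "j \<le> n - 2" using a by auto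
      have "Qf ?I ?C F0 i j m = Dd 1 + Dd j - Dd (j+1)" unfolding F0_def using Q1_1k[OF n jj] a by simp
      also have "\<dots> = A j" using Dstep[OF jj] Dd12 by simp
      finally show ?thesis using a by (simp add: A_def)
    next
      case b
      have ii: "2 \<le> i" "i \<le> (n - 1) div 2" using b hd by auto
      have "Qf ?I ?C F0 i j m = (-1)^i * (Dd i + Dd (n-i) - Dd n)" unfolding F0_def using Q1_E[OF n ii] b by simp
      also have "\<dots> = E i" using Eform b by simp
      finally show ?thesis using b by (simp add: E_def)
    qed
  qed
  have F0e: "\<forall>i j m. i\<in>?I \<longrightarrow> j\<in>?I \<longrightarrow> m\<in>?I \<longrightarrow> al1 n i + al1 n j = al1 n m \<longrightarrow> be1 n i + be1 n j = be1 n m \<longrightarrow> P i j m = Qf ?I ?C F0 i j m"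
  proof (intro allI impI)
    fix i j m assume i: "i \<in> ?I" and j: "j \<in> ?I" and m: "m \<in> ?I" and wa: "al1 n i + al1 n j = al1 n m" and wb: "be1 n i + be1 n j = be1 n m"
    have wa': "al1 n j + al1 n i = al1 n m" and wb': "be1 n j + be1 n i = be1 n m" using wa wb by auto
    have swap: "P i j m = Qf ?I ?C F0 i j m" if "P j i m = Qf ?I ?C F0 j i m"
      using that Pa[rule_format, of i j m] QA[of i j m] by simp
    show "P i j m = Qf ?I ?C F0 i j m"
    proof (cases "i = j")
      case True
      have "P i i m = 0" using Pa[rule_format, of i i m] by (rule self_neg)
      moreover have "Qf ?I ?C F0 i i m = 0" using QA[of i i m] by (rule self_neg)
      ultimately show ?thesis using True by simp
    next
      case ij: False
      show ?thesis
      proof (cases "i \<in> {n+1,n+2}")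
        case True thus ?thesis using canon[OF i j m wa wb] by blast
      next
        case ni: False
        show ?thesis
        proof (cases "j \<in> {n+1,n+2}")
          case True thus ?thesis using canon[OF j i m wa' wb'] swap by blast
        next
          case nj: False
          have ie: "1 \<le> i" "i \<le> n" using i ni by (auto simp: idxR_def)
          have je: "1 \<le> j" "j \<le> n" using j nj by (auto simp: idxR_def)
          have me: "1 \<le> m" "m \<le> n+2" using m by (auto simp: idxR_def)
          from wz1_e[OF n h ie je me ij wa wb] show ?thesis
            using canon[OF i j m wa wb] canon[OF j i m wa' wb'] swap by blast
        qed
      qed
    qed
  qed
  show ?thesis
    by (rule weight_reduce[OF fin_idx tx ty Cw Cx Cy Pa PCE F0s F0e])
qed


theorem theorem3p8:
  fixes n :: nat
  assumes "n > 5"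
  shows "(odd n \<longrightarrow> H2_adj_zero (idxR n) (brR1 n)) \<and> H2_adj_zero (idxR n) (brR2 n)"
proof
  show "odd n \<longrightarrow> H2_adj_zero (idxR n) (brR1 n)"
  proof
    assume "odd n"
    then obtain h where h: "n = 2*h+1" using oddE by blast
    show "H2_adj_zero (idxR n) (brR1 n)"
      unfolding brR1_def
    proof (rule H2_from_coeff[OF fin_idx])
      show "\<forall>a b m. a \<in> idxR n \<longrightarrow> b \<in> idxR n \<longrightarrow> m \<notin> idxR n \<longrightarrow> antisym_tab (tab1 n) a b m = 0"
        using C1_supp[OF assms] by blast
    next
      fix P :: "nat \<Rightarrow> nat \<Rightarrow> nat \<Rightarrow> complex"
      assume "\<forall>i j m. P i j m = - P j i m"
        and "\<forall>a b c m. a \<in> idxR n \<longrightarrow> b \<in> idxR n \<longrightarrow> c \<in> idxR n \<longrightarrow> m \<in> idxR n \<longrightarrow> CEq (idxR n) (antisym_tab (tab1 n)) P a b c m = 0"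
      thus "\<exists>F. \<forall>i j m. i \<in> idxR n \<longrightarrow> j \<in> idxR n \<longrightarrow> m \<in> idxR n \<longrightarrow> P i j m = Qf (idxR n) (antisym_tab (tab1 n)) F i j m"
        by (rule coef1[OF assms h])
    qed
  qed
  show "H2_adj_zero (idxR n) (brR2 n)"
    unfolding brR2_def
  proof (rule H2_from_coeff[OF fin_idx])
    show "\<forall>a b m. a \<in> idxR n \<longrightarrow> b \<in> idxR n \<longrightarrow> m \<notin> idxR n \<longrightarrow> antisym_tab (tab2 n) a b m = 0"
      using C2_supp[OF assms] by blast
  next
    fix P :: "nat \<Rightarrow> nat \<Rightarrow> nat \<Rightarrow> complex"
    assume "\<forall>i j m. P i j m = - P j i m"
      and "\<forall>a b c m. a \<in> idxR n \<longrightarrow> b \<in> idxR n \<longrightarrow> c \<in> idxR n \<longrightarrow> m \<in> idxR n \<longrightarrow> CEq (idxR n) (antisym_tab (tab2 n)) P a b c m = 0"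
    thus "\<exists>F. \<forall>i j m. i \<in> idxR n \<longrightarrow> j \<in> idxR n \<longrightarrow> m \<in> idxR n \<longrightarrow> P i j m = Qf (idxR n) (antisym_tab (tab2 n)) F i j m"
      by (rule coef2[OF assms])
  qed
qed

end
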